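(* Let $m\ge4$ and let $g(x_1,x_2,x_3)=a_1(cx_1+\alpha_1)^2+a_2(cx_2+\alpha_2)^2+a_3(cx_3+\alpha_3)^2$ be a tight regular complete quadratic polynomial where $a_1,a_2,a_3$ are positive integers with $\gcd(a_1,a_2,a_3)=1$ and $a_1\le a_2\le a_3$, the lattice $J=\langle a_1,a_2,a_3\rangle$ is $p$-stable for every prime $p\nmid c$, $\alpha_i\in\mathbb{Z}$ with $0<\alpha_i<c/2$, and $\gcd(c,\alpha_1\alpha_2\alpha_3)=1$. Let $T$ be the set of primes $p\ge5$ such that $J\otimes\mathbb{Z}_p$ is anisotropic, and $t=|T|$. Let $\kappa$ be a positive integer coprime to every prime in $T$, and let $\nu$ be a nonnegative integer such that $\delta c(\kappa n+\nu)+a_1\alpha_1^2+a_2\alpha_2^2+a_3\alpha_3^2$ is represented by $g$ over $\mathbb{Z}_2$ and over $\mathbb{Z}_3$ for every integer $n\ge0$. For $u\in\mathbb{Z}_{\ge0}$ let $\beta(u)=\delta c(\kappa u+\nu)+a_1\alpha_1^2+a_2\alpha_2^2+a_3\alpha_3^2$. Then for every positive integer $s\ge t$ and every positive integer $n$, $$\bigl|\{0\le u\le n-1:\ \beta(u)\text{ is represented by }g\text{ over }\mathbb{Z}\}\bigr|\ge\eta(n,s).$$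
   Context: Define $\delta=4$ if $m$ is odd, $\delta=2$ if $m\equiv2\pmod4$, $\delta=1$ if $m\equiv0\pmod4$, and $c=\delta\frac{m-2}{2}$. Representation by $g$ over $R\in\{\mathbb{Z},\mathbb{Z}_p,\mathbb{R}\}$ means solvability of $g(\mathbf{x})=n$ with $\mathbf{x}\in R^3$; $g$ is tight regular if it represents over $\mathbb{Z}$ every integer $\ge\min\{g(\mathbf{x}):\mathbf{x}\in\mathbb{Z}^3\}$ that is represented over every $\mathbb{Z}_p$ and over $\mathbb{R}$. For an odd prime $p$ with nonsquare unit $\Delta_p$, a diagonal ternary lattice $K$ is $p$-stable if $\langle1,-1\rangle$ is represented by $K\otimes\mathbb{Z}_p$ or $K\otimes\mathbb{Z}_p\cong\langle1,-\Delta_p\rangle\perp\langle p\epsilon\rangle$ with $\epsilon\in\mathbb{Z}_p^\times$; $K$ is $2$-stable if $K\otimes\mathbb{Z}_2$ is unimodular or $\langle1,3\rangle$ or $\langle1,7\rangle$ is represented by $K\otimes\mathbb{Z}_2$. The function $\eta$: let $P$ be the set of primes $\ge5$. For an odd prime $p$ and $s\ge1$ let $\psi_p(p^s)=\frac{p^s+p+2}{2p+2}$ if $s$ is odd and $\frac{p^s+2p+1}{2p+2}$ if $s$ is even. For $n\in\mathbb{N}$ with base-$p$ expansion $n=\sum_{i=0}^e b_ip^i$ ($0\le b_i\le p-1$), let $\psi_p(n)=\sum_{1\le i\le e}b_i\psi_p(p^i)$ if $b_0=0$ and $\psi_p(n)=1+\sum_{1\le i\le e}b_i\psi_p(p^i)$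 otherwise. Then $\eta(n,s)=\min\{n-\sum_{p\in P'}\psi_p(n):\ P'\subset P,\ |P'|=s\}$. *)

theory Defs
  imports Complex_Main "HOL-Number_Theory.Number_Theory"
begin

text \<open>Vectors in R^3 are functions on indices 0,1,2 (only these indices are used).\<close>

definition delta :: "nat \<Rightarrow> int" where
  "delta m = (if odd m then 4 else if m mod 4 = 2 then 2 else 1)"

definition cconst :: "nat \<Rightarrow> int" where
  "cconst m = (delta m * (int m - 2)) div 2"

definition gval :: "(nat \<Rightarrow> int) \<Rightarrow> int \<Rightarrow> (nat \<Rightarrow> int) \<Rightarrow> (nat \<Rightarrow> int) \<Rightarrow> int" where
  "gval a c al x = (\<Sum>i<3. a i * (c * x i + al i)^2)"

definition rep_Z :: "(nat \<Rightarrow> int) \<Rightarrow> int \<Rightarrow> (nat \<Rightarrow> int) \<Rightarrow> int \<Rightarrow> bool" where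
  "rep_Z a c al n = (\<exists>x. gval a c al x = n)"

definition rep_R :: "(nat \<Rightarrow> int) \<Rightarrow> int \<Rightarrow> (nat \<Rightarrow> int) \<Rightarrow> int \<Rightarrow> bool" where
  "rep_R a c al n = (\<exists>x :: nat \<Rightarrow> real.
      (\<Sum>i<3. of_int (a i) * (of_int c * x i + of_int (al i))^2) = of_int n)"

text \<open>Solvability over Z_p, expressed via solvability modulo every power p^k
  (equivalent by compactness of Z_p^3 and density of Z in Z_p).\<close>
definition rep_Zp :: "nat \<Rightarrow> (nat \<Rightarrow> int) \<Rightarrow> int \<Rightarrow> (nat \<Rightarrow> int) \<Rightarrow> int \<Rightarrow> bool" where
  "rep_Zp p a c al n = (\<forall>k::nat. \<exists>x. [gval a c al x = n] (mod (int p ^ k)))"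

definition tight_regular :: "(nat \<Rightarrow> int) \<Rightarrow> int \<Rightarrow> (nat \<Rightarrow> int) \<Rightarrow> bool" where
  "tight_regular a c al =
     (\<forall>n::int. n \<ge> Inf (range (gval a c al)) \<and> (\<forall>p. prime p \<longrightarrow> rep_Zp p a c al n)
        \<and> rep_R a c al n \<longrightarrow> rep_Z a c al n)"

definition bform :: "(nat \<Rightarrow> int) \<Rightarrow> (nat \<Rightarrow> int) \<Rightarrow> (nat \<Rightarrow> int) \<Rightarrow> int" where
  "bform a v w = (\<Sum>i<3. a i * v i * w i)"

definition det3 :: "(nat \<Rightarrow> int) \<Rightarrow> (nat \<Rightarrow> int) \<Rightarrow> (nat \<Rightarrow> int) \<Rightarrow> int" where
  "det3 u v w = u 0 * (v 1 * w 2 - v 2 * w 1) - v 0 * (u 1 * w 2 - u 2 * w 1)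
              + w 0 * (u 1 * v 2 - u 2 * v 1)"

text \<open>The binary lattice <b1,b2> is represented by <a> tensor Z_p: there are v,w in Z_p^3 with
  B(v,v)=b1, B(w,w)=b2, B(v,w)=0 (again via all congruences mod p^k).\<close>
definition lat_rep2 :: "nat \<Rightarrow> (nat \<Rightarrow> int) \<Rightarrow> int \<Rightarrow> int \<Rightarrow> bool" where
  "lat_rep2 p a b1 b2 = (\<forall>k::nat. \<exists>v w.
      [bform a v v = b1] (mod (int p ^ k)) \<and> [bform a w w = b2] (mod (int p ^ k))
      \<and> [bform a v w = 0] (mod (int p ^ k)))"

text \<open><a> tensor Z_p is isometric to <1,-D> perp <p e> for some p-adic unit e: there is
  a basis change T in GL_3(Z_p) (columns t1 t2 t3, det a unit) with T^t diag(a) T = diag(1,-D,p e).\<close>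
definition iso_split :: "nat \<Rightarrow> (nat \<Rightarrow> int) \<Rightarrow> int \<Rightarrow> bool" where
  "iso_split p a D = (\<forall>k::nat. \<exists>e t1 t2 t3. coprime e (int p) \<and> coprime (det3 t1 t2 t3) (int p)
      \<and> [bform a t1 t1 = 1] (mod (int p ^ k)) \<and> [bform a t2 t2 = - D] (mod (int p ^ k))
      \<and> [bform a t3 t3 = int p * e] (mod (int p ^ k))
      \<and> [bform a t1 t2 = 0] (mod (int p ^ k)) \<and> [bform a t1 t3 = 0] (mod (int p ^ k))
      \<and> [bform a t2 t3 = 0] (mod (int p ^ k)))"

definition p_stable :: "nat \<Rightarrow> (nat \<Rightarrow> int) \<Rightarrow> bool" where
  "p_stable p a =
    (if p = 2 then odd (a 0 * a 1 * a 2) \<or> lat_rep2 2 a 1 3 \<or> lat_rep2 2 a 1 7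
     else lat_rep2 p a 1 (-1) \<or>
       (\<exists>D. \<not> int p dvd D \<and> \<not> QuadRes (int p) D \<and> iso_split p a D))"

text \<open><a> tensor Z_p anisotropic: no nonzero x in Z_p^3 with Q(x)=0 (equivalently no primitive one;
  via congruences).\<close>
definition anisotropic :: "nat \<Rightarrow> (nat \<Rightarrow> int) \<Rightarrow> bool" where
  "anisotropic p a = (\<not> (\<forall>k::nat. \<exists>x. \<not> (\<forall>i<3. int p dvd x i)
      \<and> [bform a x x = 0] (mod (int p ^ k))))"

definition psi_pp :: "nat \<Rightarrow> nat \<Rightarrow> real" where
  "psi_pp p s = (if odd s then (real p ^ s + real p + 2) / (2 * real p + 2)
                 else (real p ^ s + 2 * real p + 1) / (2 * real p + 2))"

text \<open>Base-p digits b_i = (n div p^i) mod p; digits with i > e vanish, and e \<le> n.\<close>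
definition psi :: "nat \<Rightarrow> nat \<Rightarrow> real" where
  "psi p n = (if n mod p = 0 then 0 else 1)
             + (\<Sum>i\<in>{1..n}. real ((n div p ^ i) mod p) * psi_pp p i)"

definition eta :: "nat \<Rightarrow> nat \<Rightarrow> real" where
  "eta n s = Inf {real n - (\<Sum>p\<in>P'. psi p n) | P'.
      P' \<subseteq> {p. prime p \<and> p \<ge> 5} \<and> finite P' \<and> card P' = s}"

end

theory Submission
  imports Defs
begin

definition badv :: "nat \<Rightarrow> int \<Rightarrow> bool \<Rightarrow> int \<Rightarrow> bool" where
 "badv p e b x = (x \<noteq> 0 \<and> (odd (multiplicity (int p) x) = b) \<and>
     \<not> QuadRes (int p) (e * (x div int p ^ multiplicity (int p) x)))"

lemma QR_cong: "[x = y] (mod m) \<Longrightarrow> QuadRes m x = QuadRes m y"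
  unfolding QuadRes_def by (meson cong_sym cong_trans)

lemma badv_times_p:
  assumes "prime p"
  shows "badv p e b (int p * y) = badv p e (\<not>b) y"
proof (cases "y = 0")
  case True then show ?thesis by (simp add: badv_def)
next
  case False
  have pi: "prime (int p)" using assms by auto
  have pu: "\<not> is_unit (int p)" using pi not_prime_unit by blast
  have pz: "int p \<noteq> 0" using assms prime_gt_0_nat by auto
  have m: "multiplicity (int p) (int p * y) = Suc (multiplicity (int p) y)"
    using multiplicity_times_same[OF False pu pz] .
  have d: "int p * y div int p ^ Suc (multiplicity (int p) y) = y div int p ^ multiplicity (int p) y"
    using pz by simp
  show ?thesis using False pz unfolding badv_def m d by auto
qed

lemma badv_unit:
  assumes "\<not> int p dvd x"
  shows "badv p e b x = (\<not> b \<and> \<not> QuadRes (int p) (e * x))"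
proof -
  have "x \<noteq> 0" using assms by auto
  moreover have "multiplicity (int p) x = 0" using assms by (rule not_dvd_imp_multiplicity_0)
  ultimately show ?thesis unfolding badv_def by auto
qed

lemma badv_dvd: "badv p e True x \<Longrightarrow> int p dvd x"
  unfolding badv_def
  by (metis dvd_power odd_pos multiplicity_dvd dvd_trans gr0_conv_Suc power_Suc dvd_triv_left)

lemma sum_split_add: "(\<Sum>w<a+b. f w) = (\<Sum>w<a. f w) + (\<Sum>w<b. f (a+w)) " for f :: "nat \<Rightarrow> 'a::comm_monoid_add"
  by (induction b) (auto simp: add.assoc)

lemma sum_split_mult: "(\<Sum>w<p*M. f w) = (\<Sum>w0<p. \<Sum>w1<M. f (w0 + p*w1))" for f :: "nat \<Rightarrow> 'a::comm_monoid_add"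
proof (induction M)
  case 0 then show ?case by simp
next
  case (Suc M)
  have "(\<Sum>w<p*Suc M. f w) = (\<Sum>w<p*M. f w) + (\<Sum>w<p. f (p*M+w))"
    using sum_split_add[of f "p*M" p] by (simp add: add.commute)
  also have "\<dots> = (\<Sum>w0<p. \<Sum>w1<M. f (w0 + p*w1)) + (\<Sum>w0<p. f (w0 + p*M))"
    using Suc by (simp add: add.commute)
  also have "\<dots> = (\<Sum>w0<p. \<Sum>w1<Suc M. f (w0 + p*w1))"
    by (simp add: sum.distrib)
  finally show ?case .
qed

lemma sq_inj:
  fixes x y :: int
  assumes "prime p" "0 \<le> x" "2*x < int p" "0 \<le> y" "2*y < int p" "[x^2 = y^2] (mod int p)"
  shows "x = y"
proof -
  have pi: "prime (int p)" using assms(1) by auto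
  have "int p dvd (x - y) * (x + y)"
    using assms(6) by (simp add: cong_iff_dvd_diff power2_eq_square algebra_simps)
  then have "int p dvd (x - y) \<or> int p dvd (x + y)" using pi prime_dvd_mult_iff by blast
  then show ?thesis
  proof
    assume h: "int p dvd x - y"
    show ?thesis
    proof (rule ccontr)
      assume "x \<noteq> y"
      then have "\<bar>int p\<bar> \<le> \<bar>x - y\<bar>" using h dvd_imp_le_int[of "x - y" "int p"] by auto
      then show False using assms by auto
    qed
  next
    assume h: "int p dvd x + y"
    show ?thesis
    proof (rule ccontr)
      assume "x \<noteq> y"
      then have "x + y \<noteq> 0" using assms by auto
      then have "\<bar>int p\<bar> \<le> \<bar>x + y\<bar>" using h dvd_imp_le_int[of "x + y" "int p"] by auto
      then show False using assms by auto
    qed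
  qed
qed

lemma inv_mod:
  assumes "prime p" "\<not> int p dvd x"
  shows "\<exists>y. [x * y = 1] (mod int p ^ k)"
proof -
  have pi: "prime (int p)" using assms(1) by auto
  have "coprime x (int p)" using assms pi
    by (metis coprime_commute prime_imp_coprime)
  then have "coprime x (int p ^ k)" by simp
  then show ?thesis using cong_solve_coprime_int by blast
qed

lemma inv_mod1:
  assumes "prime p" "\<not> int p dvd x"
  shows "\<exists>y. [x * y = 1] (mod int p)"
  using inv_mod[OF assms, of 1] by simp

lemma root_unique:
  assumes "prime p" "\<not> int p dvd B" "w0 < p" "w1 < p"
    "int p dvd A + B * int w0" "int p dvd A + B * int w1"
  shows "w0 = w1"
proof -
  have pi: "prime (int p)" using assms(1) by auto
  have "int p dvd B * (int w0 - int w1)"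
    using dvd_diff[OF assms(5) assms(6)] by (simp add: algebra_simps)
  then have h: "int p dvd (int w0 - int w1)" using pi assms(2) prime_dvd_mult_iff by blast
  show ?thesis
  proof (rule ccontr)
    assume "w0 \<noteq> w1"
    then have "\<bar>int p\<bar> \<le> \<bar>int w0 - int w1\<bar>" using h dvd_imp_le_int[of "int w0 - int w1" "int p"] by auto
    then show False using assms(3,4) by auto
  qed
qed

lemma root_exists:
  assumes "prime p" "\<not> int p dvd B"
  shows "\<exists>w<p. int p dvd A + B * int w"
proof -
  obtain Bi where Bi: "[B * Bi = 1] (mod int p)" using inv_mod1[OF assms] by blast
  define w where "w = nat ((- A * Bi) mod int p)"
  have p0: "int p > 0" using assms(1) prime_gt_0_nat by auto
  have iw: "int w = (- A * Bi) mod int p" unfolding w_def using p0 by simp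
  have wlt: "w < p" using iw p0 by (metis of_nat_less_iff pos_mod_bound)
  have "[A + B * int w = A + B * (- A * Bi)] (mod int p)"
    unfolding iw by (intro cong_add cong_scalar_left) (auto simp: cong_def)
  also have "A + B * (- A * Bi) = A - A * (B * Bi)" by (simp add: algebra_simps)
  also have "[A - A * (B * Bi) = A - A * 1] (mod int p)"
    by (intro cong_diff cong_scalar_left Bi) auto
  finally have "[A + B * int w = 0] (mod int p)" by simp
  then show ?thesis using wlt by (auto simp: cong_0_iff)
qed

lemma nonres_count:
  assumes p: "prime p" "odd p" and B: "\<not> int p dvd B" and e: "\<not> int p dvd e"
    and ws: "ws < p" "int p dvd A + B * int ws"
  shows "card {w0 \<in> {..<p} - {ws}. \<not> QuadRes (int p) (e * (A + B * int w0))} \<le> (p - 1) div 2"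
proof -
  have pi: "prime (int p)" using p(1) by auto
  have p0: "int p > 0" using p(1) prime_gt_0_nat by auto
  define S where "S = {..<p} - {ws}"
  define Sq where "Sq = {w0 \<in> S. QuadRes (int p) (e * (A + B * int w0))}"
  have cS: "card S = p - 1" unfolding S_def using ws by simp
  have fS: "finite S" unfolding S_def by simp
  obtain Bi where Bi: "[B * Bi = 1] (mod int p)" using inv_mod1[OF p(1) B] by blast
  obtain ei where ei: "[e * ei = 1] (mod int p)" using inv_mod1[OF p(1) e] by blast
  define h where "h x = nat ((ei * (int x)^2 - A) * Bi mod int p)" for x :: nat
  have ih: "int (h x) = (ei * (int x)^2 - A) * Bi mod int p" for x
    unfolding h_def using p0 by simp
  have hlt: "h x < p" for x using ih[of x] p0 by (metis of_nat_less_iff pos_mod_bound)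
  have hc: "[A + B * int (h x) = ei * (int x)^2] (mod int p)" for x
  proof -
    have "[A + B * int (h x) = A + B * ((ei * (int x)^2 - A) * Bi)] (mod int p)"
      unfolding ih by (intro cong_add cong_scalar_left) (auto simp: cong_def)
    also have "A + B * ((ei * (int x)^2 - A) * Bi) = A + (ei * (int x)^2 - A) * (B * Bi)"
      by (simp add: algebra_simps)
    also have "[A + (ei * (int x)^2 - A) * (B * Bi) = A + (ei * (int x)^2 - A) * 1] (mod int p)"
      by (intro cong_add cong_scalar_left Bi) auto
    finally show ?thesis by simp
  qed
  have hc2: "[e * (A + B * int (h x)) = (int x)^2] (mod int p)" for x
  proof -
    have "[e * (A + B * int (h x)) = e * (ei * (int x)^2)] (mod int p)"
      by (intro cong_scalar_left hc)
    also have "e * (ei * (int x)^2) = (e * ei) * (int x)^2" by simp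
    also have "[(e * ei) * (int x)^2 = 1 * (int x)^2] (mod int p)"
      by (intro cong_scalar_right ei)
    finally show ?thesis by simp
  qed
  have hin: "h x \<in> Sq" if x: "x \<in> {1..(p - 1) div 2}" for x
  proof -
    have nd: "\<not> int p dvd A + B * int (h x)"
    proof
      assume "int p dvd A + B * int (h x)"
      then have "int p dvd e * (A + B * int (h x))" by simp
      then have "int p dvd (int x)^2" using hc2[of x] by (simp add: cong_dvd_iff)
      then have "int p dvd int x" using pi prime_dvd_power by blast
      then have "p dvd x" by simp
      moreover have "0 < x" "x < p" using x by auto
      ultimately show False by (simp add: nat_dvd_not_less)
    qed
    have "h x \<noteq> ws" using nd ws by auto
    moreover have "QuadRes (int p) (e * (A + B * int (h x)))"
      unfolding QuadRes_def using hc2[of x] cong_sym by blast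
    ultimately show ?thesis unfolding Sq_def S_def using hlt by auto
  qed
  have hinj: "inj_on h {1..(p - 1) div 2}"
  proof
    fix x y assume x: "x \<in> {1..(p - 1) div 2}" and y: "y \<in> {1..(p - 1) div 2}" and "h x = h y"
    then have "[(int x)^2 = (int y)^2] (mod int p)"
      using hc2[of x] hc2[of y] by (metis cong_sym cong_trans)
    moreover have "2 * x < p" "2 * y < p"
    proof -
      have "2 * ((p - 1) div 2) \<le> p - 1" by simp
      moreover have "0 < p" using prime_gt_0_nat[OF p(1)] .
      ultimately show "2 * x < p" "2 * y < p" using x y by auto
    qed
    then have "2 * int x < int p" "2 * int y < int p" by linarith+
    ultimately have "int x = int y" using sq_inj[OF p(1), of "int x" "int y"] by auto
    then show "x = y" by simp
  qed
  have "card {1..(p - 1) div 2} \<le> card Sq"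
    apply (rule card_inj_on_le[OF hinj])
    using hin fS by (auto simp: Sq_def)
  then have cSq: "(p - 1) div 2 \<le> card Sq" by simp
  have "{w0 \<in> {..<p} - {ws}. \<not> QuadRes (int p) (e * (A + B * int w0))} = S - Sq"
    unfolding S_def Sq_def by auto
  moreover have "card (S - Sq) = card S - card Sq"
    by (rule card_Diff_subset) (use fS in \<open>auto simp: Sq_def intro: finite_subset\<close>)
  moreover have "(p - 1) - (p - 1) div 2 = (p - 1) div 2" using p(2) by (auto elim!: oddE)
  ultimately have "card {w0 \<in> {..<p} - {ws}. \<not> QuadRes (int p) (e * (A + B * int w0))} = (p - 1) - card Sq"
    and "(p - 1) - (p - 1) div 2 = (p - 1) div 2" using cS by auto
  then show ?thesis using cSq by linarith
qed

fun Nb :: "nat \<Rightarrow> nat \<Rightarrow> bool \<Rightarrow> nat" where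
  "Nb p 0 b = 1"
| "Nb p (Suc j) True = Nb p j False"
| "Nb p (Suc j) False = (p - 1) div 2 * p ^ j + Nb p j True"

lemma blk:
  assumes p: "prime p" "odd p" and B: "\<not> int p dvd B" and e: "\<not> int p dvd e"
  shows "(\<Sum>w<p^j. of_bool (badv p e b (A + B * int w)) :: nat) \<le> Nb p j b"
proof (induction j arbitrary: A b)
  case 0
  then show ?case by (cases b) (auto simp: card_le_Suc0_iff_eq)
next
  case (Suc j)
  obtain ws where ws: "ws < p" "int p dvd A + B * int ws" using root_exists[OF p(1) B] by blast
  define A' where "A' = (A + B * int ws) div int p"
  have A': "A + B * int ws = int p * A'" unfolding A'_def using ws(2) by simp
  define f where "f w = (of_bool (badv p e b (A + B * int w)) :: nat)" for w
  define g where "g w0 = (\<Sum>w1<p^j. f (w0 + p * w1))" for w0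
  have "(\<Sum>w<p^Suc j. f w) = (\<Sum>w0<p. g w0)"
    unfolding g_def using sum_split_mult[of f p "p^j"] by simp
  also have "\<dots> = g ws + (\<Sum>w0\<in>{..<p} - {ws}. g w0)"
    using ws(1) by (simp add: sum.remove)
  finally have split: "(\<Sum>w<p^Suc j. f w) = g ws + (\<Sum>w0\<in>{..<p} - {ws}. g w0)" .
  have gws: "g ws \<le> Nb p j (\<not> b)"
  proof -
    have "A + B * int (ws + p * w1) = int p * (A' + B * int w1)" for w1
      using A' by (simp add: algebra_simps)
    then have "f (ws + p * w1) = of_bool (badv p e (\<not> b) (A' + B * int w1))" for w1
      unfolding f_def using badv_times_p[OF p(1)] by simp
    then have "g ws = (\<Sum>w1<p^j. of_bool (badv p e (\<not> b) (A' + B * int w1)))"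
      unfolding g_def by simp
    then show ?thesis using Suc.IH[of "\<not> b" A'] by simp
  qed
  have gother: "g w0 = p^j * of_bool (\<not> b \<and> \<not> QuadRes (int p) (e * (A + B * int w0)))"
    if w0: "w0 \<in> {..<p} - {ws}" for w0
  proof -
    have nd: "\<not> int p dvd A + B * int w0"
      using w0 ws root_unique[OF p(1) B, of w0 ws A] by auto
    have "f (w0 + p * w1) = of_bool (\<not> b \<and> \<not> QuadRes (int p) (e * (A + B * int w0)))" for w1
    proof -
      have eq: "A + B * int (w0 + p * w1) = (A + B * int w0) + int p * (B * int w1)"
        by (simp add: algebra_simps)
      have nd2: "\<not> int p dvd A + B * int (w0 + p * w1)"
        unfolding eq using nd by (simp add: dvd_add_left_iff)
      have c: "[e * (A + B * int (w0 + p * w1)) = e * (A + B * int w0)] (mod int p)"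
        unfolding eq by (intro cong_scalar_left) (simp add: cong_def)
      show ?thesis unfolding f_def badv_unit[OF nd2] QR_cong[OF c] by simp
    qed
    then show ?thesis unfolding g_def by simp
  qed
  show ?case
  proof (cases b)
    case True
    have "(\<Sum>w0\<in>{..<p} - {ws}. g w0) = 0" using gother True by simp
    then show ?thesis using split gws True unfolding f_def by simp
  next
    case False
    have "(\<Sum>w0\<in>{..<p} - {ws}. g w0) =
          (\<Sum>w0\<in>{..<p} - {ws}. p^j * of_bool (\<not> QuadRes (int p) (e * (A + B * int w0))))"
      using gother False by simp
    also have "\<dots> = p^j * card (({..<p} - {ws}) \<inter> {w0. \<not> QuadRes (int p) (e * (A + B * int w0))})"
      by (simp add: sum_distrib_left[symmetric])
    also have "\<dots> \<le> p^j * ((p - 1) div 2)"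
    proof -
      have "({..<p} - {ws}) \<inter> {w0. \<not> QuadRes (int p) (e * (A + B * int w0))} =
            {w0 \<in> {..<p} - {ws}. \<not> QuadRes (int p) (e * (A + B * int w0))}" by auto
      then show ?thesis using nonres_count[OF p B e ws] by simp
    qed
    finally show ?thesis using split gws False unfolding f_def by (simp add: mult.commute)
  qed
qed

lemma Nb_psi:
  assumes "odd p" "p > 1"
  shows "real (Nb p (Suc j) True) = psi_pp p (Suc j)"
proof -
  have h: "real ((p - 1) div 2) = (real p - 1) / 2" using assms
    by (auto elim!: oddE)
  have den: "2 * real p + 2 \<noteq> 0" by (smt (verit) of_nat_0_le_iff)
  have "real (Nb p (Suc j) True) = psi_pp p (Suc j) \<and> real (Nb p (Suc (Suc j)) True) = psi_pp p (Suc (Suc j))"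
  proof (induction j)
    case 0
    have "psi_pp p 1 = 1" unfolding psi_pp_def using den by (simp add: field_simps)
    moreover have "psi_pp p 2 = (real p + 1) / 2" unfolding psi_pp_def using den
      by (simp add: field_simps power2_eq_square)
    ultimately show ?case using h by (simp add: field_simps numeral_2_eq_2)
  next
    case (Suc j)
    have "real (Nb p (Suc (Suc (Suc j))) True) = real ((p - 1) div 2) * real p ^ Suc j + real (Nb p (Suc j) True)"
      by simp
    also have "\<dots> = (real p - 1) / 2 * real p ^ Suc j + psi_pp p (Suc j)" using Suc h by simp
    also have "\<dots> = psi_pp p (Suc (Suc (Suc j)))"
      unfolding psi_pp_def using den by (simp add: field_simps; (simp add: algebra_simps)?)
    finally show ?case using Suc by simp
  qed
  then show ?thesis by simp
qed

lemma blocks: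
  assumes p: "prime p" "odd p" and B: "\<not> int p dvd B" and e: "\<not> int p dvd e"
  shows "(\<Sum>w<p^j * k. of_bool (badv p e b (A + B * int w)) :: nat) \<le> k * Nb p j b"
proof (induction k arbitrary: A)
  case 0 then show ?case by simp
next
  case (Suc k)
  have "(\<Sum>w<p^j * Suc k. of_bool (badv p e b (A + B * int w)) :: nat) =
     (\<Sum>w<p^j * k. of_bool (badv p e b (A + B * int w))) +
     (\<Sum>w<p^j. of_bool (badv p e b ((A + B * int (p^j * k)) + B * int w)))"
    using sum_split_add[of "\<lambda>w. of_bool (badv p e b (A + B * int w)) :: nat" "p^j * k" "p^j"]
    by (simp add: algebra_simps)
  also have "\<dots> \<le> k * Nb p j b + Nb p j b"
    using Suc.IH[of A] blk[OF p B e, where j=j and b=b and A="A + B * int (p^j * k)"] by linarith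
  finally show ?case by simp
qed

function G :: "nat \<Rightarrow> nat \<Rightarrow> nat \<Rightarrow> real" where
  "G p j q = (if q = 0 \<or> p < 2 then 0 else real (q mod p) * psi_pp p j + G p (Suc j) (q div p))"
  by auto
termination by (relation "measure (\<lambda>(p,j,q). q)") auto

declare G.simps[simp del]

lemma G_bound:
  assumes p: "prime p" "odd p" and B: "\<not> int p dvd B" and e: "\<not> int p dvd e"
  shows "j \<ge> 1 \<Longrightarrow> real (\<Sum>w<p^j * q. of_bool (badv p e True (A + B * int w)) :: nat) \<le> G p j q"
proof (induction q arbitrary: A j rule: less_induct)
  case (less q)
  have p2: "p \<ge> 2" using p(1) prime_ge_2_nat by auto
  show ?case
  proof (cases "q = 0")
    case True
    then show ?thesis by (simp add: G.simps)
  next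
    case False
    have Gq: "G p j q = real (q mod p) * psi_pp p j + G p (Suc j) (q div p)"
      using False p2 by (subst G.simps) simp
    have "p^j * q = p^j * (q mod p + p * (q div p))" by (simp only: mod_mult_div_eq)
    also have "\<dots> = p^j * (q mod p) + p^(Suc j) * (q div p)" by (simp only: distrib_left power_Suc ac_simps)
    finally have qq: "p^j * q = p^j * (q mod p) + p^(Suc j) * (q div p)" .
    define f where "f w = (of_bool (badv p e True (A + B * int w)) :: nat)" for w
    have "(\<Sum>w<p^j * q. f w) = (\<Sum>w<p^j * (q mod p). f w) + (\<Sum>w<p^(Suc j) * (q div p). f (p^j * (q mod p) + w))"
      unfolding qq by (rule sum_split_add)
    also have "(\<Sum>w<p^(Suc j) * (q div p). f (p^j * (q mod p) + w)) =
       (\<Sum>w<p^(Suc j) * (q div p). of_bool (badv p e True ((A + B * int (p^j * (q mod p))) + B * int w)))"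
      unfolding f_def by (simp add: algebra_simps)
    finally have sp: "real (\<Sum>w<p^j * q. f w) = real (\<Sum>w<p^j * (q mod p). f w) +
       real (\<Sum>w<p^(Suc j) * (q div p). of_bool (badv p e True ((A + B * int (p^j * (q mod p))) + B * int w)) :: nat)"
      by simp
    have b1: "real (\<Sum>w<p^j * (q mod p). f w) \<le> real (q mod p) * psi_pp p j"
    proof -
      have "(\<Sum>w<p^j * (q mod p). f w) \<le> (q mod p) * Nb p j True"
        unfolding f_def by (rule blocks[OF p B e])
      moreover have "real (Nb p j True) = psi_pp p j"
        using Nb_psi[OF p(2), of "j - 1"] p2 less.prems by simp
      ultimately show ?thesis by (metis of_nat_le_iff of_nat_mult)
    qed
    have b2: "real (\<Sum>w<p^(Suc j) * (q div p). of_bool (badv p e True ((A + B * int (p^j * (q mod p))) + B * int w)) :: nat)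
        \<le> G p (Suc j) (q div p)"
      using less.IH[of "q div p" "Suc j"] False p2 by simp
    show ?thesis using sp b1 b2 Gq unfolding f_def by linarith
  qed
qed

lemma G_sum:
  assumes p2: "p \<ge> 2"
  shows "q < p^L \<Longrightarrow> (\<Sum>i<L. real (q div p^i mod p) * psi_pp p (i + j)) = G p j q"
proof (induction L arbitrary: q j)
  case 0
  then show ?case by (simp add: G.simps)
next
  case (Suc L)
  have "q < p^L * p" using Suc.prems by (simp add: mult.commute)
  then have "q div p < p^L" by (rule less_mult_imp_div_less)
  then have ih: "(\<Sum>i<L. real (q div p div p^i mod p) * psi_pp p (i + Suc j)) = G p (Suc j) (q div p)"
    using Suc.IH by blast
  have "(\<Sum>i<Suc L. real (q div p^i mod p) * psi_pp p (i + j)) =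
      real (q mod p) * psi_pp p j + (\<Sum>i<L. real (q div p^(Suc i) mod p) * psi_pp p (Suc i + j))"
    by (subst sum.lessThan_Suc_shift) simp
  also have "(\<Sum>i<L. real (q div p^(Suc i) mod p) * psi_pp p (Suc i + j)) =
     (\<Sum>i<L. real (q div p div p^i mod p) * psi_pp p (i + Suc j))"
    by (simp add: div_mult2_eq)
  finally show ?case using ih p2
    by (cases "q = 0") (auto simp: G.simps[of p j])
qed

lemma psi_G:
  assumes p2: "p \<ge> 2"
  shows "psi p n = (if n mod p = 0 then 0 else 1) + G p 1 (n div p)"
proof -
  have "(\<Sum>i\<in>{1..n}. real ((n div p ^ i) mod p) * psi_pp p i) =
        (\<Sum>i<n. real ((n div p ^ Suc i) mod p) * psi_pp p (Suc i))"
    unfolding One_nat_def by (rule sum.atLeast1_atMost_eq)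
  also have "\<dots> = (\<Sum>i<n. real (n div p div p ^ i mod p) * psi_pp p (i + 1))"
    by (simp add: div_mult2_eq)
  also have "\<dots> = G p 1 (n div p)"
  proof (rule G_sum[OF p2])
    have "n div p \<le> n" by simp
    also have "n < 2 ^ n" by (rule less_exp)
    also have "(2::nat) ^ n \<le> p ^ n" using p2 by (simp add: power_mono)
    finally show "n div p < p ^ n" .
  qed
  finally show ?thesis unfolding psi_def by simp
qed

lemma count_bad:
  assumes p: "prime p" "odd p" and B: "\<not> int p dvd B" and e: "\<not> int p dvd e"
  shows "real (card {u \<in> {0..<n}. badv p e True (A + B * int u)}) \<le> psi p n"
proof -
  have p2: "p \<ge> 2" using p(1) prime_ge_2_nat by auto
  define f where "f w = (of_bool (badv p e True (A + B * int w)) :: nat)" for w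
  have c: "card {u \<in> {0..<n}. badv p e True (A + B * int u)} = (\<Sum>w<n. f w)"
  proof -
    have "{u \<in> {0..<n}. badv p e True (A + B * int u)} = {..<n} \<inter> {w. badv p e True (A + B * int w)}"
      by auto
    then show ?thesis unfolding f_def by simp
  qed
  have nn: "n = p^1 * (n div p) + n mod p" by simp
  have "(\<Sum>w<n. f w) = (\<Sum>w<p^1 * (n div p). f w) + (\<Sum>w<n mod p. f (p^1 * (n div p) + w))"
    by (subst nn, rule sum_split_add)
  moreover have "real (\<Sum>w<p^1 * (n div p). f w) \<le> G p 1 (n div p)"
    unfolding f_def by (rule G_bound[OF p B e]) simp
  moreover have "(\<Sum>w<n mod p. f (p^1 * (n div p) + w)) \<le> (if n mod p = 0 then 0 else 1)"
  proof (cases "n mod p = 0")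
    case True then show ?thesis by simp
  next
    case False
    define A2 where "A2 = A + B * int (p * (n div p))"
    have "(\<Sum>w<n mod p. f (p^1 * (n div p) + w)) = card ({..<n mod p} \<inter> {w. badv p e True (A2 + B * int w)})"
      unfolding f_def A2_def by (simp add: algebra_simps)
    also have "\<dots> \<le> Suc 0"
    proof (subst card_le_Suc0_iff_eq, simp, intro ballI)
      fix w1 w2 assume w1: "w1 \<in> {..<n mod p} \<inter> {w. badv p e True (A2 + B * int w)}"
        and w2: "w2 \<in> {..<n mod p} \<inter> {w. badv p e True (A2 + B * int w)}"
      have "n mod p < p" using p2 by simp
      then show "w1 = w2"
        using w1 w2 root_unique[OF p(1) B, of w1 w2 A2] badv_dvd by auto
    qed
    finally show ?thesis using False by simp
  qed
  ultimately have "real (\<Sum>w<n. f w) \<le> G p 1 (n div p) + (if n mod p = 0 then 0 else 1)"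
    by (smt (verit, best) of_nat_add of_nat_le_iff of_nat_1 of_nat_0)
  then show ?thesis unfolding c psi_G[OF p2] by simp
qed

lemma not_dvd_2:
  assumes "prime p" "odd p" shows "\<not> int p dvd 2"
proof
  assume "int p dvd 2"
  then have "p dvd 2" using int_dvd_int_iff[of p 2] by simp
  then have "p \<le> 2" by (simp add: dvd_imp_le)
  moreover have "p \<ge> 2" using assms(1) prime_ge_2_nat by auto
  ultimately have "p = 2" by simp
  then show False using assms(2) by simp
qed

lemma aux2:
  fixes a y P m i t q r PS PK :: int
  assumes "t - a*y^2 = P*m" "2*a*y*i - 1 = q*r" "P*P = PS*PK" "P*q = PS"
  shows "a*(y + P*(m*i))^2 - t = PS*(m*r) + PS*(PK*a*(m*i)^2)"
proof -
  have "a*(y + P*(m*i))^2 - t = -(t - a*y^2) + P*m*(2*a*y*i) + a*(m*i)^2*(P*P)"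
    by (simp add: power2_eq_square algebra_simps)
  also have "\<dots> = -(P*m) + P*m*(q*r + 1) + a*(m*i)^2*(PS*PK)"
    using assms by (simp add: algebra_simps)
  also have "\<dots> = (P*q)*(m*r) + a*(m*i)^2*(PS*PK)" by (simp add: algebra_simps)
  also have "\<dots> = PS*(m*r) + PS*(PK*a*(m*i)^2)" using assms(4) by (simp add: algebra_simps)
  finally show ?thesis .
qed

lemma hensel:
  assumes p: "prime p" "odd p" and a: "\<not> int p dvd a" and y0: "\<not> int p dvd y0"
    and k: "k \<ge> 1" and c: "[a * y0^2 = t] (mod int p ^ k)"
  shows "\<exists>y. [y = y0] (mod int p ^ k) \<and> [a * y^2 = t] (mod int p ^ K)"
proof (induction K)
  case 0
  then show ?case by (intro exI[of _ y0]) simp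
next
  case (Suc K)
  show ?case
  proof (cases "Suc K \<le> k")
    case True
    have "int p ^ Suc K dvd int p ^ k" using True by (rule le_imp_power_dvd)
    then have "[a*y0^2 = t] (mod int p ^ Suc K)" by (rule cong_dvd_modulus[OF c])
    then show ?thesis by (intro exI[of _ y0]) simp
  next
    case False
    then have Kk: "K \<ge> k" by simp
    obtain y where y: "[y = y0] (mod int p ^ k)" "[a * y^2 = t] (mod int p ^ K)" using Suc.IH by blast
    have pi: "prime (int p)" using p(1) by auto
    have "int p dvd int p ^ k" using k by (simp add: dvd_power)
    then have yp: "[y = y0] (mod int p)" by (rule cong_dvd_modulus[OF y(1)])
    have ny: "\<not> int p dvd y" using y0 cong_dvd_iff[OF yp] by simp
    have n2ay: "\<not> int p dvd 2 * a * y"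
    proof
      assume "int p dvd 2 * a * y"
      then have "int p dvd 2 * a \<or> int p dvd y" using pi prime_dvd_mult_iff by blast
      moreover have "int p dvd 2 * a \<Longrightarrow> int p dvd 2 \<or> int p dvd a" using pi prime_dvd_mult_iff by blast
      ultimately show False using not_dvd_2[OF p] a ny by blast
    qed
    obtain i where i: "[2 * a * y * i = 1] (mod int p)" using inv_mod1[OF p(1) n2ay] by blast
    have "int p ^ K dvd t - a * y^2" using cong_sym[OF y(2)] by (simp add: cong_iff_dvd_diff)
    then obtain m where m: "t - a * y^2 = int p ^ K * m" by (elim dvdE)
    define z where "z = m * i"
    define y' where "y' = y + int p ^ K * z"
    have "[y' = y] (mod int p ^ k)"
    proof -
      have "int p ^ k dvd int p ^ K" using Kk by (rule le_imp_power_dvd)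
      then have "int p ^ k dvd y' - y" unfolding y'_def by simp
      then show ?thesis by (simp add: cong_iff_dvd_diff)
    qed
    then have c1: "[y' = y0] (mod int p ^ k)" using y(1) by (rule cong_trans)
    have "int p dvd 2 * a * y * i - 1" using i by (simp add: cong_iff_dvd_diff)
    then obtain r where r: "2 * a * y * i - 1 = int p * r" by (elim dvdE)
    have PP: "int p ^ K * int p ^ K = int p ^ Suc K * int p ^ (K - 1)"
    proof -
      obtain K' where "K = Suc K'" using Kk k by (cases K) auto
      then show ?thesis by (simp add: power_add[symmetric])
    qed
    have eq: "a * y'^2 - t = int p ^ Suc K * (m * r) + int p ^ Suc K * (int p ^ (K - 1) * a * z^2)"
      unfolding y'_def z_def by (rule aux2[OF m r PP]) (simp add: mult.commute)
    have "[a * y'^2 = t] (mod int p ^ Suc K)"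
      unfolding cong_iff_dvd_diff eq by simp
    then show ?thesis using c1 by blast
  qed
qed

lemma pigeon:
  assumes p: "prime p" "odd p" and al: "\<not> int p dvd \<alpha>" and be: "\<not> int p dvd \<beta>"
  shows "\<exists>x y. [\<alpha> * x^2 + \<beta> * y^2 = \<gamma>] (mod int p)"
proof -
  from p(2) obtain k where pk: "p = 2*k+1" by (auto elim: oddE)
  have pi: "prime (int p)" using p(1) by auto
  define I where "I = {0..int k}"
  have injl: "x = x'" if c: "\<not> int p dvd c" and x: "x \<in> I" and x': "x' \<in> I"
     and d: "int p dvd c * x^2 - c * x'^2" for c x x'
  proof -
    have "c * x^2 - c * x'^2 = c * (x^2 - x'^2)" by (simp add: algebra_simps)
    then have "int p dvd x^2 - x'^2" using d c pi prime_dvd_mult_iff by metis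
    then have "[x^2 = x'^2] (mod int p)" by (simp add: cong_iff_dvd_diff)
    moreover have "0 \<le> x" "2 * x < int p" "0 \<le> x'" "2 * x' < int p" using x x' pk unfolding I_def by auto
    ultimately show ?thesis using sq_inj[OF p(1), of x x'] by blast
  qed
  define X where "X = (\<lambda>x. (\<alpha> * x^2) mod int p) ` I"
  define Y where "Y = (\<lambda>y. (\<gamma> - \<beta> * y^2) mod int p) ` I"
  have cI: "card I = k + 1" unfolding I_def by simp
  have cX: "card X = k + 1"
  proof -
    have "inj_on (\<lambda>x. (\<alpha> * x^2) mod int p) I"
    proof (rule inj_onI)
      fix x x' assume "x \<in> I" "x' \<in> I" "(\<alpha> * x^2) mod int p = (\<alpha> * x'^2) mod int p"
      then show "x = x'" using injl[OF al] by (simp add: mod_eq_dvd_iff)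
    qed
    then show ?thesis unfolding X_def using cI card_image by metis
  qed
  have cY: "card Y = k + 1"
  proof -
    have "inj_on (\<lambda>y. (\<gamma> - \<beta> * y^2) mod int p) I"
    proof (rule inj_onI)
      fix x x' assume "x \<in> I" "x' \<in> I" "(\<gamma> - \<beta> * x^2) mod int p = (\<gamma> - \<beta> * x'^2) mod int p"
      then have "int p dvd (\<gamma> - \<beta> * x^2) - (\<gamma> - \<beta> * x'^2)" "x' \<in> I" "x \<in> I"
        by (simp_all add: mod_eq_dvd_iff)
      moreover have "(\<gamma> - \<beta> * x^2) - (\<gamma> - \<beta> * x'^2) = \<beta> * x'^2 - \<beta> * x^2" by simp
      ultimately show "x = x'" using injl[OF be, of x' x] by simp
    qed
    then show ?thesis unfolding Y_def using cI card_image by metis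
  qed
  have sub: "X \<union> Y \<subseteq> {0..<int p}" unfolding X_def Y_def using pk by auto
  have "X \<inter> Y \<noteq> {}"
  proof
    assume e: "X \<inter> Y = {}"
    have fin: "finite X" "finite Y" unfolding X_def Y_def I_def by auto
    have "card (X \<union> Y) = 2*k+2" using card_Un_disjoint[OF fin e] cX cY by simp
    moreover have "card (X \<union> Y) \<le> card {0..<int p}" using sub by (intro card_mono) auto
    ultimately show False using pk by simp
  qed
  then obtain x y where "x \<in> I" "y \<in> I" "(\<alpha> * x^2) mod int p = (\<gamma> - \<beta> * y^2) mod int p"
    unfolding X_def Y_def by auto
  then have "int p dvd \<alpha> * x^2 - (\<gamma> - \<beta> * y^2)" by (simp add: mod_eq_dvd_iff)
  then have "[\<alpha> * x^2 + \<beta> * y^2 = \<gamma>] (mod int p)" by (simp add: cong_iff_dvd_diff algebra_simps)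
  then show ?thesis by blast
qed

lemma bin_rep:
  assumes p: "prime p" "odd p" and al: "\<not> int p dvd \<alpha>" and be: "\<not> int p dvd \<beta>"
    and et: "\<not> int p dvd \<eta>"
  shows "\<exists>y1 y2. [\<alpha> * y1^2 + \<beta> * y2^2 = \<eta>] (mod int p ^ K)"
proof -
  have pi: "prime (int p)" using p(1) by auto
  obtain x y where xy: "[\<alpha> * x^2 + \<beta> * y^2 = \<eta>] (mod int p)" using pigeon[OF p al be] by blast
  show ?thesis
  proof (cases "int p dvd x")
    case False
    have "[\<alpha> * x^2 = \<eta> - \<beta> * y^2] (mod int p ^ 1)"
      using xy by (simp add: cong_iff_dvd_diff algebra_simps)
    then obtain y1 where "[\<alpha> * y1^2 = \<eta> - \<beta> * y^2] (mod int p ^ K)"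
      using hensel[OF p al False, of 1] by auto
    then have "[\<alpha> * y1^2 + \<beta> * y^2 = \<eta>] (mod int p ^ K)"
      by (simp add: cong_iff_dvd_diff algebra_simps)
    then show ?thesis by blast
  next
    case True
    have ny: "\<not> int p dvd y"
    proof
      assume "int p dvd y"
      then have "int p dvd \<alpha> * x^2 + \<beta> * y^2" using True by (simp add: power2_eq_square)
      then show False using et cong_dvd_iff[OF xy] by simp
    qed
    have "[\<beta> * y^2 = \<eta> - \<alpha> * x^2] (mod int p ^ 1)"
      using xy by (simp add: cong_iff_dvd_diff algebra_simps)
    then obtain y2 where "[\<beta> * y2^2 = \<eta> - \<alpha> * x^2] (mod int p ^ K)"
      using hensel[OF p be ny, of 1] by auto
    then have "[\<alpha> * x^2 + \<beta> * y2^2 = \<eta>] (mod int p ^ K)"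
      by (simp add: cong_iff_dvd_diff algebra_simps)
    then show ?thesis by blast
  qed
qed

lemma sum3: "(\<Sum>i<3. f i) = f 0 + f 1 + f (2::nat)"
  by (simp add: eval_nat_numeral)

lemma bform3: "bform a v w = a 0 * v 0 * w 0 + a 1 * v 1 * w 1 + a 2 * v 2 * w 2"
  unfolding bform_def sum3 ..

lemma all3: "(\<forall>i<3. P i) = (P 0 \<and> P 1 \<and> P (2::nat))"
  by (auto simp: eval_nat_numeral less_Suc_eq)

lemma rep_from_Q:
  assumes p: "prime p" and c: "\<not> int p dvd c"
    and h: "\<forall>K. \<exists>y. [bform a y y = \<beta>] (mod int p ^ K)"
  shows "rep_Zp p a c al \<beta>"
  unfolding rep_Zp_def
proof
  fix K
  obtain y where y: "[bform a y y = \<beta>] (mod int p ^ K)" using h by blast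
  obtain ci where ci: "[c * ci = 1] (mod int p ^ K)" using inv_mod[OF p c] by blast
  define x where "x i = ci * (y i - al i)" for i
  have xi: "[c * x i + al i = y i] (mod int p ^ K)" for i
  proof -
    have "[c * x i + al i = (c * ci) * (y i - al i) + al i] (mod int p ^ K)"
      unfolding x_def by (simp add: algebra_simps)
    also have "[(c * ci) * (y i - al i) + al i = 1 * (y i - al i) + al i] (mod int p ^ K)"
      by (intro cong_add cong_scalar_right ci) auto
    finally show ?thesis by simp
  qed
  have "[gval a c al x = bform a y y] (mod int p ^ K)"
    unfolding gval_def bform_def
  proof (rule cong_sum)
    fix i
    have "[a i * (c * x i + al i)^2 = a i * (y i)^2] (mod int p ^ K)"
      by (intro cong_scalar_left cong_pow xi)
    then show "[a i * (c * x i + al i)^2 = a i * y i * y i] (mod int p ^ K)"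
      by (simp add: power2_eq_square mult.assoc)
  qed
  then show "\<exists>x. [gval a c al x = \<beta>] (mod int p ^ K)" using y cong_trans by blast
qed

lemma bform_lin2:
  "bform a (\<lambda>i. s * v i + t * w i) (\<lambda>i. s * v i + t * w i)
     = s^2 * bform a v v + 2 * s * t * bform a v w + t^2 * bform a w w"
  unfolding bform3 by (simp add: algebra_simps power2_eq_square)

lemma hyp_rep:
  assumes p: "prime p" "odd p" and L: "lat_rep2 p a 1 (-1)"
  shows "\<exists>y. [bform a y y = \<beta>] (mod int p ^ K)"
proof -
  obtain v w where vw: "[bform a v v = 1] (mod int p ^ K)" "[bform a w w = -1] (mod int p ^ K)"
      "[bform a v w = 0] (mod int p ^ K)"
    using L unfolding lat_rep2_def by blast
  have "odd (int p ^ K)" using p(2) by simp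
  then obtain h2 where h2: "int p ^ K + 1 = 2 * h2" by (metis odd_succ_div_two dvd_mult_div_cancel even_add odd_one dvd_def)
  define s where "s = (\<beta> + 1) * h2"
  define t where "t = (\<beta> - 1) * h2"
  define y where "y i = s * v i + t * w i" for i
  have "bform a y y = s^2 * bform a v v + 2 * s * t * bform a v w + t^2 * bform a w w"
    unfolding y_def by (rule bform_lin2)
  also have "[\<dots> = s^2 * 1 + 2 * s * t * 0 + t^2 * (-1)] (mod int p ^ K)"
    by (intro cong_add cong_scalar_left vw)
  also have "s^2 * 1 + 2 * s * t * 0 + t^2 * (-1) = \<beta> * (2 * h2)^2"
    unfolding s_def t_def by (simp add: algebra_simps power2_eq_square)
  also have "\<dots> = \<beta> + int p ^ K * (\<beta> * (int p ^ K + 2))"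
    unfolding h2[symmetric] by (simp add: algebra_simps power2_eq_square)
  also have "[\<beta> + int p ^ K * (\<beta> * (int p ^ K + 2)) = \<beta>] (mod int p ^ K)"
    by (simp add: cong_iff_dvd_diff)
  finally show ?thesis by blast
qed

lemma hyp_isotropic:
  assumes p: "prime p" and L: "lat_rep2 p a 1 (-1)"
  shows "\<not> anisotropic p a"
proof -
  have "\<exists>x. \<not> (\<forall>i<3. int p dvd x i) \<and> [bform a x x = 0] (mod int p ^ k)" for k
  proof -
  obtain v w where vw: "[bform a v v = 1] (mod int p ^ Suc k)" "[bform a w w = -1] (mod int p ^ Suc k)"
      "[bform a v w = 0] (mod int p ^ Suc k)"
    using L unfolding lat_rep2_def by blast
  define x where "x i = v i + w i" for i
  have "bform a x x = 1^2 * bform a v v + 2 * 1 * 1 * bform a v w + 1^2 * bform a w w"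
    unfolding x_def using bform_lin2[of a 1 v 1 w] by simp
  also have "[\<dots> = 1^2 * 1 + 2 * 1 * 1 * 0 + 1^2 * (-1)] (mod int p ^ Suc k)"
    by (intro cong_add cong_scalar_left vw)
  finally have c0: "[bform a x x = 0] (mod int p ^ Suc k)" by simp
  have "int p ^ k dvd int p ^ Suc k" by (simp add: le_imp_power_dvd)
  then have c1: "[bform a x x = 0] (mod int p ^ k)" using cong_dvd_modulus[OF c0] by blast
  have "int p dvd int p ^ Suc k" by simp
  then have m1: "[bform a v v = 1] (mod int p)" "[bform a v w = 0] (mod int p)"
    using cong_dvd_modulus[OF vw(1)] cong_dvd_modulus[OF vw(3)] by blast+
  have np: "\<not> (\<forall>i<3. int p dvd x i)"
  proof
    assume d: "\<forall>i<3. int p dvd x i"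
    have "bform a v w + bform a v v = a 0 * v 0 * x 0 + a 1 * v 1 * x 1 + a 2 * v 2 * x 2"
      unfolding bform3 x_def by (simp add: algebra_simps)
    moreover have "int p dvd a 0 * v 0 * x 0 + a 1 * v 1 * x 1 + a 2 * v 2 * x 2"
      using d unfolding all3 by simp
    ultimately have "int p dvd bform a v w + bform a v v" by simp
    moreover have "[bform a v w + bform a v v = 0 + 1] (mod int p)" by (intro cong_add m1)
    ultimately have "int p dvd 1" using cong_dvd_iff by fastforce
    then show False using prime_gt_1_nat[OF p] by simp
  qed
  show "\<exists>x. \<not> (\<forall>i<3. int p dvd x i) \<and> [bform a x x = 0] (mod int p ^ k)"
    using np c1 by blast
  qed
  then show ?thesis unfolding anisotropic_def by blast
qed

lemma generic_isotropic:
  assumes p: "prime p" "odd p" and a: "\<forall>i<3. \<not> int p dvd a i"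
  shows "\<not> anisotropic p a"
proof -
  have "\<exists>x. \<not> (\<forall>i<3. int p dvd x i) \<and> [bform a x x = 0] (mod int p ^ k)" for k
  proof -
  obtain y1 y2 where y: "[a 0 * y1^2 + a 1 * y2^2 = - a 2] (mod int p ^ k)"
    using bin_rep[OF p, of "a 0" "a 1" "- a 2" k] a unfolding all3 by auto
  define x where "x i = (if i = 0 then y1 else if i = 1 then y2 else 1)" for i :: nat
  have "bform a x x = (a 0 * y1^2 + a 1 * y2^2) + a 2"
    unfolding bform3 x_def by (simp add: power2_eq_square)
  also have "[\<dots> = - a 2 + a 2] (mod int p ^ k)" by (intro cong_add y) auto
  finally have c: "[bform a x x = 0] (mod int p ^ k)" by simp
  have "\<not> int p dvd x 2" unfolding x_def using prime_gt_1_nat[OF p(1)] by simp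
  then have "\<not> (\<forall>i<3. int p dvd x i)" unfolding all3 by blast
  then show "\<exists>x. \<not> (\<forall>i<3. int p dvd x i) \<and> [bform a x x = 0] (mod int p ^ k)"
    using c by blast
  qed
  then show ?thesis unfolding anisotropic_def by blast
qed

definition iso_data :: "nat \<Rightarrow> (nat \<Rightarrow> int) \<Rightarrow> int \<Rightarrow> int \<Rightarrow> nat \<Rightarrow> (nat \<Rightarrow> int) \<Rightarrow> (nat \<Rightarrow> int) \<Rightarrow> (nat \<Rightarrow> int) \<Rightarrow> bool" where
  "iso_data p a D e k t1 t2 t3 = (coprime e (int p) \<and> coprime (det3 t1 t2 t3) (int p)
      \<and> [bform a t1 t1 = 1] (mod (int p ^ k)) \<and> [bform a t2 t2 = - D] (mod (int p ^ k))
      \<and> [bform a t3 t3 = int p * e] (mod (int p ^ k))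
      \<and> [bform a t1 t2 = 0] (mod (int p ^ k)) \<and> [bform a t1 t3 = 0] (mod (int p ^ k))
      \<and> [bform a t2 t3 = 0] (mod (int p ^ k)))"

lemma iso_split_iff: "iso_split p a D = (\<forall>k. \<exists>e t1 t2 t3. iso_data p a D e k t1 t2 t3)"
  unfolding iso_split_def iso_data_def ..

lemma iso_data_mono:
  assumes "iso_data p a D e k t1 t2 t3" "j \<le> k"
  shows "iso_data p a D e j t1 t2 t3"
proof -
  have d: "int p ^ j dvd int p ^ k" using assms(2) by (rule le_imp_power_dvd)
  show ?thesis using assms(1) unfolding iso_data_def
    by (simp add: cong_dvd_modulus[OF _ d])
qed

lemma lin3_raw:
  fixes a0 a1 a2 y1 y2 y3 u0 u1 u2 v0 v1 v2 w0 w1 w2 :: int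
  shows "a0 * (y1*u0 + y2*v0 + y3*w0) * (y1*u0 + y2*v0 + y3*w0) + a1 * (y1*u1 + y2*v1 + y3*w1) * (y1*u1 + y2*v1 + y3*w1) + a2 * (y1*u2 + y2*v2 + y3*w2) * (y1*u2 + y2*v2 + y3*w2)
   = y1^2 * (a0*u0*u0 + a1*u1*u1 + a2*u2*u2) + y2^2 * (a0*v0*v0 + a1*v1*v1 + a2*v2*v2) + y3^2 * (a0*w0*w0 + a1*w1*w1 + a2*w2*w2)
     + 2*y1*y2*(a0*u0*v0 + a1*u1*v1 + a2*u2*v2) + 2*y1*y3*(a0*u0*w0 + a1*u1*w1 + a2*u2*w2) + 2*y2*y3*(a0*v0*w0 + a1*v1*w1 + a2*v2*w2)"
  by (simp add: algebra_simps power2_eq_square)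

lemma cramer_raw:
  fixes x0 x1 x2 u0 u1 u2 v0 v1 v2 w0 w1 w2 :: int
  shows
 "(x0 * (v1 * w2 - v2 * w1) - v0 * (x1 * w2 - x2 * w1) + w0 * (x1 * v2 - x2 * v1)) * u0
  + (u0 * (x1 * w2 - x2 * w1) - x0 * (u1 * w2 - u2 * w1) + w0 * (u1 * x2 - u2 * x1)) * v0
  + (u0 * (v1 * x2 - v2 * x1) - v0 * (u1 * x2 - u2 * x1) + x0 * (u1 * v2 - u2 * v1)) * w0
  = (u0 * (v1 * w2 - v2 * w1) - v0 * (u1 * w2 - u2 * w1) + w0 * (u1 * v2 - u2 * v1)) * x0"
 "(x0 * (v1 * w2 - v2 * w1) - v0 * (x1 * w2 - x2 * w1) + w0 * (x1 * v2 - x2 * v1)) * u1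
  + (u0 * (x1 * w2 - x2 * w1) - x0 * (u1 * w2 - u2 * w1) + w0 * (u1 * x2 - u2 * x1)) * v1
  + (u0 * (v1 * x2 - v2 * x1) - v0 * (u1 * x2 - u2 * x1) + x0 * (u1 * v2 - u2 * v1)) * w1
  = (u0 * (v1 * w2 - v2 * w1) - v0 * (u1 * w2 - u2 * w1) + w0 * (u1 * v2 - u2 * v1)) * x1"
 "(x0 * (v1 * w2 - v2 * w1) - v0 * (x1 * w2 - x2 * w1) + w0 * (x1 * v2 - x2 * v1)) * u2
  + (u0 * (x1 * w2 - x2 * w1) - x0 * (u1 * w2 - u2 * w1) + w0 * (u1 * x2 - u2 * x1)) * v2
  + (u0 * (v1 * x2 - v2 * x1) - v0 * (u1 * x2 - u2 * x1) + x0 * (u1 * v2 - u2 * v1)) * w2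
  = (u0 * (v1 * w2 - v2 * w1) - v0 * (u1 * w2 - u2 * w1) + w0 * (u1 * v2 - u2 * v1)) * x2"
  by (simp_all add: algebra_simps)

lemma bform_lin3:
  "bform a (\<lambda>i. y1 * t1 i + y2 * t2 i + y3 * t3 i) (\<lambda>i. y1 * t1 i + y2 * t2 i + y3 * t3 i)
   = y1^2 * bform a t1 t1 + y2^2 * bform a t2 t2 + y3^2 * bform a t3 t3
     + 2 * y1 * y2 * bform a t1 t2 + 2 * y1 * y3 * bform a t1 t3 + 2 * y2 * y3 * bform a t2 t3"
  unfolding bform3 by (rule lin3_raw)

lemma iso_val:
  assumes "iso_data p a D e k t1 t2 t3"
  shows "[bform a (\<lambda>i. y1 * t1 i + y2 * t2 i + y3 * t3 i) (\<lambda>i. y1 * t1 i + y2 * t2 i + y3 * t3 i)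
          = y1^2 - D * y2^2 + int p * e * y3^2] (mod int p ^ k)"
proof -
  have "[y1^2 * bform a t1 t1 + y2^2 * bform a t2 t2 + y3^2 * bform a t3 t3
     + 2 * y1 * y2 * bform a t1 t2 + 2 * y1 * y3 * bform a t1 t3 + 2 * y2 * y3 * bform a t2 t3
     = y1^2 * 1 + y2^2 * (- D) + y3^2 * (int p * e) + 2 * y1 * y2 * 0 + 2 * y1 * y3 * 0 + 2 * y2 * y3 * 0] (mod int p ^ k)"
    using assms unfolding iso_data_def by (intro cong_add cong_scalar_left) auto
  then show ?thesis unfolding bform_lin3 by (simp add: algebra_simps)
qed

lemma cramer:
  assumes "i < 3"
  shows "det3 x t2 t3 * t1 i + det3 t1 x t3 * t2 i + det3 t1 t2 x * t3 i = det3 t1 t2 t3 * x i"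
proof -
  consider (a) "i = 0" | (b) "i = 1" | (c) "i = 2" using assms by force
  then show ?thesis
  proof cases
    case a show ?thesis unfolding a det3_def by (rule cramer_raw(1))
  next
    case b show ?thesis unfolding b det3_def by (rule cramer_raw(2))
  next
    case c show ?thesis unfolding c det3_def by (rule cramer_raw(3))
  qed
qed

lemma cramer_transfer:
  assumes p: "prime p" and d: "iso_data p a D e 2 t1 t2 t3"
  shows "\<exists>y1 y2 y3. [bform a x x = y1^2 - D * y2^2 + int p * e * y3^2] (mod int p ^ 2)
     \<and> (int p dvd y1 \<and> int p dvd y2 \<and> int p dvd y3 \<longrightarrow> (\<forall>i<3. int p dvd x i))"
proof -
  have "coprime (det3 t1 t2 t3) (int p)" using d unfolding iso_data_def by blast
  then have "coprime (det3 t1 t2 t3) (int p ^ 2)" by simp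
  then obtain d' where d': "[det3 t1 t2 t3 * d' = 1] (mod int p ^ 2)" using cong_solve_coprime_int by blast
  define y1 where "y1 = d' * det3 x t2 t3"
  define y2 where "y2 = d' * det3 t1 x t3"
  define y3 where "y3 = d' * det3 t1 t2 x"
  define z where "z i = y1 * t1 i + y2 * t2 i + y3 * t3 i" for i
  have zx: "[z i = x i] (mod int p ^ 2)" if "i < 3" for i
  proof -
    have "z i = d' * (det3 x t2 t3 * t1 i + det3 t1 x t3 * t2 i + det3 t1 t2 x * t3 i)"
      unfolding z_def y1_def y2_def y3_def by (simp add: algebra_simps)
    also have "\<dots> = (det3 t1 t2 t3 * d') * x i" using cramer[OF that] by simp
    also have "[\<dots> = 1 * x i] (mod int p ^ 2)" by (intro cong_scalar_right d')
    finally show ?thesis by simp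
  qed
  have "[bform a x x = bform a z z] (mod int p ^ 2)"
    unfolding bform_def
  proof (rule cong_sum)
    fix i :: nat assume "i \<in> {..<3::nat}"
    then have "[x i = z i] (mod int p ^ 2)" using zx cong_sym by blast
    then show "[a i * x i * x i = a i * z i * z i] (mod int p ^ 2)"
      by (intro cong_mult cong_scalar_left) auto
  qed
  also have "[bform a z z = y1^2 - D * y2^2 + int p * e * y3^2] (mod int p ^ 2)"
    unfolding z_def by (rule iso_val[OF d])
  finally have c: "[bform a x x = y1^2 - D * y2^2 + int p * e * y3^2] (mod int p ^ 2)" .
  have "\<forall>i<3. int p dvd x i" if "int p dvd y1" "int p dvd y2" "int p dvd y3"
  proof (intro allI impI)
    fix i :: nat assume i: "i < 3"
    have "int p dvd z i" unfolding z_def using that by simp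
    moreover have "[z i = x i] (mod int p)" using cong_dvd_modulus[OF zx[OF i], of "int p"] by simp
    ultimately show "int p dvd x i" using cong_dvd_iff by blast
  qed
  then show ?thesis using c by blast
qed

lemma core:
  assumes p: "prime p" and D: "\<not> int p dvd D" "\<not> QuadRes (int p) D"
    and c: "[y1^2 - D * y2^2 + int p * e * y3^2 = int p * f] (mod int p ^ 2)"
  shows "int p dvd y1 \<and> int p dvd y2 \<and> [e * y3^2 = f] (mod int p)"
proof -
  have pi: "prime (int p)" using p by auto
  have "int p dvd int p ^ 2" by simp
  then have "[y1^2 - D * y2^2 + int p * e * y3^2 = int p * f] (mod int p)"
    by (rule cong_dvd_modulus[OF c])
  then have h1: "int p dvd y1^2 - D * y2^2 + int p * e * y3^2 - int p * f" by (simp add: cong_iff_dvd_diff)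
  have "y1^2 - D * y2^2 = (y1^2 - D * y2^2 + int p * e * y3^2 - int p * f) - int p * (e * y3^2 - f)"
    by (simp add: algebra_simps)
  then have "int p dvd y1^2 - D * y2^2" using h1 by (metis dvd_diff dvd_triv_left)
  then have "[y1^2 - D * y2^2 = 0] (mod int p)" by (simp add: cong_iff_dvd_diff)
  then have c1: "[y1^2 = D * y2^2] (mod int p)" by (simp add: cong_iff_dvd_diff)
  have y2: "int p dvd y2"
  proof (rule ccontr)
    assume n: "\<not> int p dvd y2"
    obtain i where i: "[y2 * i = 1] (mod int p)" using inv_mod1[OF p n] by blast
    have "[(y1 * i)^2 = D * (y2 * i)^2] (mod int p)"
      using cong_scalar_right[OF c1, of "i^2"] by (simp add: power_mult_distrib algebra_simps)
    also have "[D * (y2 * i)^2 = D * 1^2] (mod int p)" by (intro cong_scalar_left cong_pow i)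
    finally have "QuadRes (int p) D" unfolding QuadRes_def by auto
    then show False using D by simp
  qed
  then have "int p dvd D * y2^2" by (simp add: power2_eq_square)
  then have "int p dvd y1^2" using c1 cong_dvd_iff by blast
  then have y1: "int p dvd y1" using pi prime_dvd_power by blast
  obtain u1 where u1: "y1 = int p * u1" using y1 by (elim dvdE)
  obtain u2 where u2: "y2 = int p * u2" using y2 by (elim dvdE)
  have "y1^2 - D * y2^2 + int p * e * y3^2 - int p * f = int p ^ 2 * (u1^2 - D * u2^2) + int p * (e * y3^2 - f)"
    unfolding u1 u2 by (simp add: algebra_simps power2_eq_square)
  moreover have "int p ^ 2 dvd y1^2 - D * y2^2 + int p * e * y3^2 - int p * f"
    using c by (simp add: cong_iff_dvd_diff)
  ultimately have "int p ^ 2 dvd int p * (e * y3^2 - f)" by (simp add: dvd_add_right_iff)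
  then have "int p dvd e * y3^2 - f" using p by (simp add: power2_eq_square)
  then show ?thesis using y1 y2 by (simp add: cong_iff_dvd_diff)
qed

lemma iso_aniso:
  assumes p: "prime p" and D: "\<not> int p dvd D" "\<not> QuadRes (int p) D" and S: "iso_split p a D"
  shows "anisotropic p a"
  unfolding anisotropic_def
proof
  assume "\<forall>k. \<exists>x. \<not> (\<forall>i<3. int p dvd x i) \<and> [bform a x x = 0] (mod int p ^ k)"
  then obtain x where x: "\<not> (\<forall>i<3. int p dvd x i)" "[bform a x x = 0] (mod int p ^ 2)" by blast
  obtain e t1 t2 t3 where d: "iso_data p a D e 2 t1 t2 t3" using S unfolding iso_split_iff by blast
  obtain y1 y2 y3 where y: "[bform a x x = y1^2 - D * y2^2 + int p * e * y3^2] (mod int p ^ 2)"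
    "int p dvd y1 \<and> int p dvd y2 \<and> int p dvd y3 \<longrightarrow> (\<forall>i<3. int p dvd x i)"
    using cramer_transfer[OF p d, of x] by blast
  have "[y1^2 - D * y2^2 + int p * e * y3^2 = int p * 0] (mod int p ^ 2)"
    using y(1) x(2) by (metis cong_sym cong_trans mult_zero_right)
  then have c: "int p dvd y1" "int p dvd y2" "[e * y3^2 = 0] (mod int p)"
    using core[OF p D] by blast+
  have pi: "prime (int p)" using p by auto
  have ne: "\<not> int p dvd e"
  proof
    assume "int p dvd e"
    moreover have "coprime e (int p)" using d unfolding iso_data_def by blast
    ultimately show False using pi by (metis coprime_absorb_right not_prime_unit)
  qed
  have "int p dvd e * y3^2" using c(3) by (simp add: cong_0_iff)
  then have "int p dvd y3" using ne pi by (metis prime_dvd_mult_iff prime_dvd_power)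
  then show False using c y(2) x(1) by blast
qed

lemma e_stable:
  assumes p: "prime p" and D: "\<not> int p dvd D" "\<not> QuadRes (int p) D"
    and d2: "iso_data p a D e2 2 t1 t2 t3" and dK: "iso_data p a D eK K s1 s2 s3" and K: "K \<ge> 2"
  shows "\<exists>s. [e2 * s^2 = eK] (mod int p)"
proof -
  have dK2: "iso_data p a D eK 2 s1 s2 s3" using iso_data_mono[OF dK K] .
  then have v: "[bform a s3 s3 = int p * eK] (mod int p ^ 2)" unfolding iso_data_def by blast
  obtain y1 y2 y3 where y: "[bform a s3 s3 = y1^2 - D * y2^2 + int p * e2 * y3^2] (mod int p ^ 2)"
    using cramer_transfer[OF p d2, of s3] by blast
  have "[y1^2 - D * y2^2 + int p * e2 * y3^2 = int p * eK] (mod int p ^ 2)"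
    using y v by (metis cong_sym cong_trans)
  then show ?thesis using core[OF p D] by blast
qed

lemma iso_rep:
  assumes p: "prime p" "odd p" and D: "\<not> int p dvd D" "\<not> QuadRes (int p) D"
    and S: "iso_split p a D" and d2: "iso_data p a D e2 2 t1 t2 t3"
    and b: "\<beta> \<noteq> 0" and nb: "\<not> badv p e2 True \<beta>"
  shows "\<exists>y. [bform a y y = \<beta>] (mod int p ^ K)"
proof -
  have pi: "prime (int p)" using p(1) by auto
  have pu: "\<not> is_unit (int p)" using pi not_prime_unit by blast
  have pz: "int p \<noteq> 0" using p(1) prime_gt_0_nat by auto
  define v where "v = multiplicity (int p) \<beta>"
  define \<eta> where "\<eta> = \<beta> div int p ^ v"
  have bv: "\<beta> = int p ^ v * \<eta>" unfolding \<eta>_def v_def using multiplicity_dvd[of "int p" \<beta>] by simp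
  have ne: "\<not> int p dvd \<eta>" unfolding \<eta>_def v_def using multiplicity_decompose[OF b pu] .
  have main: "\<exists>y. [bform a y y = \<beta>] (mod int p ^ K)" if K: "K \<ge> 2" for K
  proof -
    obtain eK s1 s2 s3 where dK: "iso_data p a D eK K s1 s2 s3" using S unfolding iso_split_iff by blast
    obtain s where s: "[e2 * s^2 = eK] (mod int p)" using e_stable[OF p(1) D d2 dK K] by blast
    have neK: "\<not> int p dvd eK"
    proof
      assume "int p dvd eK"
      moreover have "coprime eK (int p)" using dK unfolding iso_data_def by blast
      ultimately show False using pi by (metis coprime_absorb_right not_prime_unit)
    qed
    have "\<exists>y1 y2 y3. [y1^2 - D * y2^2 + int p * eK * y3^2 = \<beta>] (mod int p ^ K)"
    proof (cases "even v")
      case True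
      then obtain j where j: "v = 2 * j" by (elim evenE)
      have nD: "\<not> int p dvd - D" using D by simp
      have n1: "\<not> int p dvd 1" using pu by simp
      obtain z1 z2 where z: "[1 * z1^2 + (- D) * z2^2 = \<eta>] (mod int p ^ K)"
        using bin_rep[OF p n1 nD ne] by blast
      have "(int p ^ j * z1)^2 - D * (int p ^ j * z2)^2 + int p * eK * 0^2 = int p ^ v * (1 * z1^2 + (- D) * z2^2)"
        unfolding j by (simp add: power_mult_distrib power_mult algebra_simps)
      also have "[\<dots> = int p ^ v * \<eta>] (mod int p ^ K)" by (intro cong_scalar_left z)
      finally show ?thesis unfolding bv[symmetric] by blast
    next
      case False
      then obtain j where j: "v = 2 * j + 1" by (elim oddE)
      have "QuadRes (int p) (e2 * \<eta>)" using nb b False unfolding badv_def v_def \<eta>_def by auto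
      then obtain r where r: "[r^2 = e2 * \<eta>] (mod int p)" unfolding QuadRes_def by blast
      obtain ki where ki: "[eK * ki = 1] (mod int p)" using inv_mod1[OF p(1) neK] by blast
      define y0 where "y0 = r * s * ki"
      have "eK * y0^2 = r^2 * s^2 * eK * ki^2" unfolding y0_def by (simp add: algebra_simps power_mult_distrib)
      also have "[r^2 * s^2 * eK * ki^2 = (e2 * \<eta>) * s^2 * eK * ki^2] (mod int p)"
        by (intro cong_scalar_right r)
      also have "(e2 * \<eta>) * s^2 * eK * ki^2 = (e2 * s^2) * (\<eta> * eK * ki^2)" by (simp add: algebra_simps)
      also have "[(e2 * s^2) * (\<eta> * eK * ki^2) = eK * (\<eta> * eK * ki^2)] (mod int p)"
        by (intro cong_scalar_right s)
      also have "eK * (\<eta> * eK * ki^2) = (eK * ki)^2 * \<eta>" by (simp add: algebra_simps power2_eq_square)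
      also have "[(eK * ki)^2 * \<eta> = 1^2 * \<eta>] (mod int p)" by (intro cong_scalar_right cong_pow ki)
      finally have cy: "[eK * y0^2 = \<eta>] (mod int p ^ 1)" by simp
      have ny0: "\<not> int p dvd y0"
      proof
        assume "int p dvd y0"
        then have "int p dvd eK * y0^2" by (simp add: power2_eq_square)
        then show False using ne cong_dvd_iff[OF cy[simplified]] by blast
      qed
      obtain z where z: "[eK * z^2 = \<eta>] (mod int p ^ K)" using hensel[OF p neK ny0 _ cy] by auto
      have "0^2 - D * 0^2 + int p * eK * (int p ^ j * z)^2 = int p ^ v * (eK * z^2)"
        unfolding j by (simp add: power_mult_distrib power_mult power_add algebra_simps)
      also have "[\<dots> = int p ^ v * \<eta>] (mod int p ^ K)" by (intro cong_scalar_left z)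
      finally show ?thesis unfolding bv[symmetric] by blast
    qed
    then obtain y1 y2 y3 where yy: "[y1^2 - D * y2^2 + int p * eK * y3^2 = \<beta>] (mod int p ^ K)" by blast
    show ?thesis using cong_trans[OF iso_val[OF dK, of y1 y2 y3] yy] by blast
  qed
  obtain y where y: "[bform a y y = \<beta>] (mod int p ^ max K 2)" using main[of "max K 2"] by auto
  have "int p ^ K dvd int p ^ max K 2" by (simp add: le_imp_power_dvd)
  then show ?thesis using cong_dvd_modulus[OF y] by blast
qed

lemma rep_pc:
  assumes p: "prime p" "odd p" and pc: "int p dvd c" and c0: "c \<noteq> 0"
    and i0: "i0 < 3" and ai: "\<not> int p dvd a i0" and nal: "\<not> int p dvd al i0"
    and cb: "c dvd \<beta> - (\<Sum>i<3. a i * al i ^ 2)"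
  shows "rep_Zp p a c al \<beta>"
  unfolding rep_Zp_def
proof
  fix K
  have pi: "prime (int p)" using p(1) by auto
  have pu: "\<not> is_unit (int p)" using pi not_prime_unit by blast
  define g0 where "g0 = (\<Sum>i<3. a i * al i ^ 2)"
  define t where "t = \<beta> - g0 + a i0 * al i0 ^ 2"
  define v where "v = multiplicity (int p) c"
  define c' where "c' = c div int p ^ v"
  have cv: "c = int p ^ v * c'" unfolding c'_def v_def using multiplicity_dvd[of "int p" c] by simp
  have nc': "\<not> int p dvd c'" unfolding c'_def v_def using multiplicity_decompose[OF c0 pu] .
  have v1: "v \<ge> 1"
  proof (rule ccontr)
    assume "\<not> v \<ge> 1"
    then have "v = 0" by simp
    then show False using pc nc' cv by simp
  qed
  have "int p ^ v dvd \<beta> - g0" using cb cv unfolding g0_def by (metis dvd_mult_left)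
  then have "[a i0 * al i0 ^ 2 = t] (mod int p ^ v)" unfolding t_def
    by (simp add: cong_iff_dvd_diff algebra_simps dvd_diff_commute)
  then obtain y where y: "[y = al i0] (mod int p ^ v)" "[a i0 * y^2 = t] (mod int p ^ K)"
    using hensel[OF p ai nal v1] by blast
  have "int p ^ v dvd y - al i0" using y(1) by (simp add: cong_iff_dvd_diff)
  then obtain r where r: "y - al i0 = int p ^ v * r" by (elim dvdE)
  obtain ci where ci: "[c' * ci = 1] (mod int p ^ K)" using inv_mod[OF p(1) nc'] by blast
  define z where "z = ci * r"
  have "c * z + al i0 = int p ^ v * r * (c' * ci) + al i0" unfolding cv z_def by (simp add: algebra_simps)
  also have "[\<dots> = int p ^ v * r * 1 + al i0] (mod int p ^ K)" by (intro cong_add cong_scalar_left ci) auto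
  also have "int p ^ v * r * 1 + al i0 = y" using r by simp
  finally have cz: "[c * z + al i0 = y] (mod int p ^ K)" .
  define x where "x j = (if j = i0 then z else 0)" for j
  have fin: "finite {..<3::nat}" by simp
  have i0in: "i0 \<in> {..<3}" using i0 by simp
  have "gval a c al x = a i0 * (c * z + al i0)^2 + (\<Sum>j\<in>{..<3} - {i0}. a j * (c * x j + al j)^2)"
    unfolding gval_def using sum.remove[OF fin i0in, of "\<lambda>j. a j * (c * x j + al j)^2"] by (simp add: x_def)
  also have "(\<Sum>j\<in>{..<3} - {i0}. a j * (c * x j + al j)^2) = (\<Sum>j\<in>{..<3} - {i0}. a j * al j ^ 2)"
    by (rule sum.cong) (auto simp: x_def)
  also have "(\<Sum>j\<in>{..<3} - {i0}. a j * al j ^ 2) = g0 - a i0 * al i0 ^ 2"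
    unfolding g0_def using sum.remove[OF fin i0in, of "\<lambda>j. a j * al j ^ 2"] by simp
  finally have gx: "gval a c al x = a i0 * (c * z + al i0)^2 + (g0 - a i0 * al i0 ^ 2)" .
  have "[a i0 * (c * z + al i0)^2 + (g0 - a i0 * al i0 ^ 2) = a i0 * y^2 + (g0 - a i0 * al i0 ^ 2)] (mod int p ^ K)"
    by (intro cong_add cong_scalar_left cong_pow cz) auto
  also have "[a i0 * y^2 + (g0 - a i0 * al i0 ^ 2) = t + (g0 - a i0 * al i0 ^ 2)] (mod int p ^ K)"
    by (intro cong_add y(2)) auto
  also have "t + (g0 - a i0 * al i0 ^ 2) = \<beta>" unfolding t_def by simp
  finally show "\<exists>x. [gval a c al x = \<beta>] (mod int p ^ K)" using gx by metis
qed

lemma psi_pp_nonneg: "psi_pp p i \<ge> 0"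
  unfolding psi_pp_def by (simp add: divide_nonneg_pos add_nonneg_nonneg)

lemma psi_nonneg: "psi p n \<ge> 0"
  unfolding psi_def by (intro add_nonneg_nonneg sum_nonneg mult_nonneg_nonneg psi_pp_nonneg) auto

lemma psi_pp_le:
  assumes "p \<ge> 1" "i \<ge> 1"
  shows "psi_pp p i \<le> real p ^ i"
proof -
  have pi1: "real p ^ i \<ge> 1" using assms by simp
  have den: "2 * real p + 2 > 0" by simp
  have m: "2 * real p + 1 \<le> (2 * real p + 1) * real p ^ i"
    using mult_left_mono[OF pi1, of "2 * real p + 1"] by simp
  have "real p \<ge> 1" using assms(1) by simp
  then have "real p + 2 \<le> 2 * real p + 1" by linarith
  then have "real p + 2 \<le> (2 * real p + 1) * real p ^ i" using m by (rule order_trans)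
  moreover note m
  ultimately show ?thesis unfolding psi_pp_def using den
    by (auto simp: divide_le_eq algebra_simps)
qed

lemma psi_le:
  assumes "p \<ge> 1"
  shows "psi p n \<le> 1 + real n * real n"
proof -
  have t: "real ((n div p ^ i) mod p) * psi_pp p i \<le> real n" if "i \<in> {1..n}" for i
  proof -
    have "real ((n div p ^ i) mod p) * psi_pp p i \<le> real ((n div p ^ i) mod p) * real p ^ i"
      using psi_pp_le[OF assms, of i] that by (intro mult_left_mono) auto
    also have "\<dots> \<le> real (n div p ^ i) * real p ^ i"
      by (intro mult_right_mono) auto
    also have "\<dots> = real (n div p ^ i * p ^ i)" by simp
    also have "\<dots> \<le> real n" by (simp del: of_nat_mult)
    finally show ?thesis .
  qed
  have "(\<Sum>i\<in>{1..n}. real ((n div p ^ i) mod p) * psi_pp p i) \<le> (\<Sum>i\<in>{1..n}. real n)"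
    by (rule sum_mono) (rule t)
  also have "\<dots> = real n * real n" by simp
  finally show ?thesis unfolding psi_def by auto
qed

lemma delta_cases: "delta m = 1 \<or> delta m = 2 \<or> delta m = 4"
  unfolding delta_def by auto

theorem lemma3p5:
  fixes m n s \<kappa> \<nu> :: nat and c :: int and a al :: "nat \<Rightarrow> int" and T :: "nat set"
  assumes m4: "m \<ge> 4"
    and c_def: "c = cconst m"
    and a_pos: "\<forall>i<3. a i > 0"
    and a_ord: "a 0 \<le> a 1" "a 1 \<le> a 2"
    and a_gcd: "gcd (a 0) (gcd (a 1) (a 2)) = 1"
    and stable: "\<forall>p. prime p \<and> \<not> int p dvd c \<longrightarrow> p_stable p a"
    and al_bd: "\<forall>i<3. 0 < al i \<and> 2 * al i < c"
    and al_gcd: "gcd c (al 0 * al 1 * al 2) = 1"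
    and tight: "tight_regular a c al"
    and T_def: "T = {p. prime p \<and> p \<ge> 5 \<and> anisotropic p a}"
    and kappa: "\<kappa> > 0" "\<forall>p\<in>T. coprime \<kappa> p"
    and nu: "\<forall>u::nat. rep_Zp 2 a c al (delta m * c * int (\<kappa> * u + \<nu>) + (\<Sum>i<3. a i * al i ^ 2))
                   \<and> rep_Zp 3 a c al (delta m * c * int (\<kappa> * u + \<nu>) + (\<Sum>i<3. a i * al i ^ 2))"
    and s: "s > 0" "s \<ge> card T"
    and n: "n > 0"
  shows "real (card {u \<in> {0..<n}.
            rep_Z a c al (delta m * c * int (\<kappa> * u + \<nu>) + (\<Sum>i<3. a i * al i ^ 2))}) \<ge> eta n s"
proof -
  define g0 where "g0 = (\<Sum>i<3. a i * al i ^ 2)"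
  define \<beta> where "\<beta> u = delta m * c * int (\<kappa> * u + \<nu>) + (\<Sum>i<3. a i * al i ^ 2)" for u :: nat
  define A where "A = delta m * c * int \<nu> + g0"
  define B where "B = delta m * c * int \<kappa>"
  have \<beta>AB: "\<beta> u = A + B * int u" for u unfolding \<beta>_def A_def B_def g0_def by (simp add: algebra_simps)
  have a3: "a 0 > 0" "a 1 > 0" "a 2 > 0" using a_pos unfolding all3 by auto
  have al3: "al 0 > 0" "al 1 > 0" "al 2 > 0" "2 * al 0 < c" using al_bd unfolding all3 by auto
  have c0: "c > 0" using al3 by linarith
  have d0: "delta m > 0" using delta_cases[of m] by auto
  have g0pos: "g0 > 0" unfolding g0_def sum3 using a3 al3 by (simp add: add_pos_pos)
  have \<beta>g0: "\<beta> u - g0 = c * (delta m * int (\<kappa> * u + \<nu>))" for u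
    unfolding \<beta>_def g0_def by (simp add: algebra_simps)
  have \<beta>ge: "\<beta> u \<ge> g0" for u
  proof -
    have "c * (delta m * int (\<kappa> * u + \<nu>)) \<ge> 0" using c0 d0 by simp
    then show ?thesis using \<beta>g0[of u] by linarith
  qed
  have \<beta>pos: "\<beta> u \<noteq> 0" for u using \<beta>ge[of u] g0pos by linarith

  define N0 where "N0 = nat (2 * a 0 * a 1 * a 2)"
  have N0pos: "2 * a 0 * a 1 * a 2 > 0" using a3 by simp
  have Tsub: "T \<subseteq> {..N0}"
  proof
    fix p assume pT: "p \<in> T"
    then have p: "prime p" "p \<ge> 5" "anisotropic p a" unfolding T_def by auto
    have odd: "odd p" using prime_odd_nat[OF p(1)] p(2) by simp
    have "int p dvd 2 * a 0 * a 1 * a 2"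
    proof (rule ccontr)
      assume nd: "\<not> int p dvd 2 * a 0 * a 1 * a 2"
      have "\<forall>i<3. \<not> int p dvd a i"
        unfolding all3 using nd by (auto simp: dvd_mult dvd_mult2)
      then have "\<not> anisotropic p a" using generic_isotropic[OF p(1) odd] by blast
      then show False using p(3) by simp
    qed
    then have "int p dvd int N0" unfolding N0_def using N0pos by simp
    then have "p dvd N0" by simp
    moreover have "N0 > 0" unfolding N0_def using N0pos by simp
    ultimately show "p \<in> {..N0}" by (simp add: dvd_imp_le)
  qed
  have finT: "finite T" using Tsub finite_subset by blast
  define W where "W = {p \<in> T. \<not> int p dvd c}"
  have finW: "finite W" unfolding W_def using finT by simp
  have cardW: "card W \<le> s" using card_mono[OF finT, of W] s(2) unfolding W_def by auto
  have Wp: "prime p \<and> odd p \<and> p \<ge> 5 \<and> \<not> int p dvd c \<and> anisotropic p a" if "p \<in> W" for p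
    using that prime_odd_nat[of p] unfolding W_def T_def by auto
  have WB: "\<not> int p dvd B" if "p \<in> W" for p
  proof
    assume h: "int p dvd B"
    have p: "prime p" "p \<ge> 5" "\<not> int p dvd c" using Wp[OF that] by auto
    have pi: "prime (int p)" using p(1) by auto
    have "coprime \<kappa> p" using kappa(2) that unfolding W_def by auto
    then have nk: "\<not> int p dvd int \<kappa>"
      using p(1) by (metis coprime_commute int_dvd_int_iff not_prime_unit coprime_absorb_right prime_nat_iff_prime)
    have nd: "\<not> int p dvd delta m"
    proof
      assume "int p dvd delta m"
      then have "int p dvd 4" using delta_cases[of m] by (auto intro: dvd_trans)
      then have "p dvd 4" by (metis int_dvd_int_iff of_nat_numeral)
      then have "p \<le> 4" by (simp add: dvd_imp_le)
      then show False using p(2) by simp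
    qed
    have "int p dvd delta m * c \<or> int p dvd int \<kappa>" using h pi unfolding B_def by (simp add: prime_dvd_mult_iff)
    then show False using nd nk p(3) pi by (simp add: prime_dvd_mult_iff)
  qed
  have Wiso: "\<exists>D. \<not> int p dvd D \<and> \<not> QuadRes (int p) D \<and> iso_split p a D" if "p \<in> W" for p
  proof -
    have p: "prime p" "odd p" "\<not> int p dvd c" "anisotropic p a" using Wp[OF that] by auto
    have "p_stable p a" using stable p by blast
    moreover have "p \<noteq> 2" using p(2) by auto
    moreover have "\<not> lat_rep2 p a 1 (-1)" using hyp_isotropic[OF p(1)] p(4) by blast
    ultimately show ?thesis unfolding p_stable_def by auto
  qed
  define Dp where "Dp p = (SOME D. \<not> int p dvd D \<and> \<not> QuadRes (int p) D \<and> iso_split p a D)" for p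
  define ep where "ep p = (SOME e. \<exists>t1 t2 t3. iso_data p a (Dp p) e 2 t1 t2 t3)" for p
  have Dp: "\<not> int p dvd Dp p \<and> \<not> QuadRes (int p) (Dp p) \<and> iso_split p a (Dp p)" if "p \<in> W" for p
    unfolding Dp_def using someI_ex[OF Wiso[OF that]] .
  have ep: "\<exists>t1 t2 t3. iso_data p a (Dp p) (ep p) 2 t1 t2 t3" if "p \<in> W" for p
  proof -
    have "\<exists>e t1 t2 t3. iso_data p a (Dp p) e 2 t1 t2 t3" using Dp[OF that] unfolding iso_split_iff by blast
    then show ?thesis unfolding ep_def by (rule someI_ex)
  qed
  have epu: "\<not> int p dvd ep p" if pW: "p \<in> W" for p
  proof
    assume "int p dvd ep p"
    moreover obtain t1 t2 t3 where "iso_data p a (Dp p) (ep p) 2 t1 t2 t3" using ep[OF pW] by blast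
    then have "coprime (ep p) (int p)" unfolding iso_data_def by blast
    moreover have "prime (int p)" using Wp[OF pW] by auto
    ultimately show False by (metis coprime_absorb_right not_prime_unit)
  qed
  define Bad where "Bad p = {u \<in> {0..<n}. badv p (ep p) True (A + B * int u)}" for p
  have cBad: "real (card (Bad p)) \<le> psi p n" if "p \<in> W" for p
    unfolding Bad_def using count_bad[of p B "ep p" n A] Wp[OF that] WB[OF that] epu[OF that] by blast
  have good: "rep_Z a c al (\<beta> u)" if u: "u \<in> {0..<n}" and nb: "\<forall>p\<in>W. u \<notin> Bad p" for u
  proof -
    have gnn: "gval a c al x \<ge> 0" for x
      unfolding gval_def sum3 using a3 by (intro add_nonneg_nonneg mult_nonneg_nonneg) auto
    have bdd: "bdd_below (range (gval a c al))" by (rule bdd_belowI[of _ 0]) (use gnn in auto)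
    have "gval a c al (\<lambda>_. 0) = g0" unfolding gval_def g0_def by simp
    then have "Inf (range (gval a c al)) \<le> g0" using cInf_lower[OF rangeI bdd] by metis
    then have inf: "Inf (range (gval a c al)) \<le> \<beta> u" using \<beta>ge[of u] by linarith
    have R: "rep_R a c al (\<beta> u)"
    proof -
      define r :: real where "r = (real_of_int (\<beta> u) - real_of_int (a 1 * al 1 ^ 2 + a 2 * al 2 ^ 2)) / real_of_int (a 0)"
      have "\<beta> u - (a 1 * al 1 ^ 2 + a 2 * al 2 ^ 2) \<ge> a 0 * al 0 ^ 2"
        using \<beta>ge[of u] unfolding g0_def sum3 by linarith
      moreover have "a 0 * al 0 ^ 2 \<ge> 0" using a3 by simp
      ultimately have "real_of_int (\<beta> u) - real_of_int (a 1 * al 1 ^ 2 + a 2 * al 2 ^ 2) \<ge> 0"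
        by linarith
      then have r0: "r \<ge> 0" unfolding r_def using a3 by simp
      have ar: "real_of_int (a 0) * r = real_of_int (\<beta> u) - real_of_int (a 1 * al 1 ^ 2 + a 2 * al 2 ^ 2)"
        unfolding r_def using a3 by simp
      define x :: "nat \<Rightarrow> real" where "x i = (if i = 0 then (sqrt r - of_int (al 0)) / of_int c else 0)" for i
      have x0: "of_int c * x 0 + of_int (al 0) = sqrt r" unfolding x_def using c0 by simp
      have "(\<Sum>i<3. of_int (a i) * (of_int c * x i + of_int (al i))^2)
          = of_int (a 0) * (sqrt r)^2 + of_int (a 1) * (of_int (al 1))^2 + of_int (a 2) * (of_int (al 2))^2"
        unfolding sum3 x0 by (simp add: x_def)
      also have "\<dots> = of_int (\<beta> u)" using ar r0 by simp
      finally show ?thesis unfolding rep_R_def by blast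
    qed
    have P: "rep_Zp p a c al (\<beta> u)" if p: "prime p" for p
    proof -
      have p2: "p \<ge> 2" using prime_ge_2_nat[OF p] .
      consider "p = 2" | "p = 3" | "p \<ge> 5"
      proof -
        have "p \<noteq> 4"
        proof
          assume "p = 4"
          then have "prime (2 * 2 :: nat)" using p by simp
          then show False by (metis prime_product zero_neq_numeral numeral_eq_one_iff semiring_norm(85))
        qed
        then show ?thesis using p2 that by linarith
      qed
      then show ?thesis
      proof cases
        case 1 then show ?thesis using nu unfolding \<beta>_def by blast
      next
        case 2 then show ?thesis using nu unfolding \<beta>_def by blast
      next
        case 3
        have odd: "odd p" using prime_odd_nat[OF p] 3 by simp
        have pi: "prime (int p)" using p by auto
        show ?thesis
        proof (cases "int p dvd c")
          case True
          obtain i0 where i0: "i0 < 3" "\<not> int p dvd a i0"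
          proof (rule ccontr)
            assume "\<not> thesis"
            then have "\<forall>i<3. int p dvd a i" using that by blast
            then have "int p dvd gcd (a 0) (gcd (a 1) (a 2))" unfolding all3 by simp
            then have "int p dvd 1" using a_gcd by metis
            then show False using pi by (simp add: not_prime_unit)
          qed
          have nal: "\<not> int p dvd al i0"
          proof
            assume h: "int p dvd al i0"
            have "i0 = 0 \<or> i0 = 1 \<or> i0 = 2" using i0(1) by auto
            then have "int p dvd al 0 * al 1 * al 2" using h by auto
            then have "int p dvd gcd c (al 0 * al 1 * al 2)" using True by simp
            then have "int p dvd 1" using al_gcd by metis
            then show False using pi by (simp add: not_prime_unit)
          qed
          have cd: "c dvd \<beta> u - (\<Sum>i<3. a i * al i ^ 2)" using \<beta>g0[of u] unfolding g0_def by simp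
          show ?thesis using rep_pc[OF p odd True _ i0 nal cd] c0 by simp
        next
          case False
          have "\<exists>y. [bform a y y = \<beta> u] (mod int p ^ K)" for K
          proof -
            have "p_stable p a" using stable p False by blast
            moreover have "p \<noteq> 2" using 3 by simp
            ultimately have "lat_rep2 p a 1 (-1) \<or> (\<exists>D. \<not> int p dvd D \<and> \<not> QuadRes (int p) D \<and> iso_split p a D)"
              unfolding p_stable_def by simp
            then show ?thesis
            proof
              assume "lat_rep2 p a 1 (-1)"
              then show ?thesis using hyp_rep[OF p odd] by blast
            next
              assume "\<exists>D. \<not> int p dvd D \<and> \<not> QuadRes (int p) D \<and> iso_split p a D"
              then obtain D where D: "\<not> int p dvd D" "\<not> QuadRes (int p) D" "iso_split p a D" by blast
              have "anisotropic p a" using iso_aniso[OF p D] .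
              then have pW: "p \<in> W" unfolding W_def T_def using p 3 False by simp
              have nbu: "\<not> badv p (ep p) True (\<beta> u)" using nb pW u unfolding Bad_def \<beta>AB by auto
              obtain t1 t2 t3 where d2: "iso_data p a (Dp p) (ep p) 2 t1 t2 t3" using ep[OF pW] by blast
              have Dq: "\<not> int p dvd Dp p" "\<not> QuadRes (int p) (Dp p)" "iso_split p a (Dp p)" using Dp[OF pW] by auto
              show ?thesis using iso_rep[OF p odd Dq d2 \<beta>pos[of u] nbu] by blast
            qed
          qed
          then show ?thesis using rep_from_Q[OF p False] by blast
        qed
      qed
    qed
    show ?thesis using tight inf R P unfolding tight_regular_def by blast
  qed
  define U where "U = (\<Union>p\<in>W. Bad p)"
  define Good where "Good = {u \<in> {0..<n}. rep_Z a c al (\<beta> u)}"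
  have finU: "finite U" unfolding U_def Bad_def using finW by auto
  have "{0..<n} - U \<subseteq> Good" unfolding Good_def U_def using good by auto
  then have cG1: "card ({0..<n} - U) \<le> card Good" by (intro card_mono) (auto simp: Good_def)
  have "card {0..<n} \<le> card (({0..<n} - U) \<union> U)" by (intro card_mono) (use finU in auto)
  also have "\<dots> \<le> card ({0..<n} - U) + card U" by (rule card_Un_le)
  finally have cG2: "n \<le> card ({0..<n} - U) + card U" by simp
  have "card U \<le> (\<Sum>p\<in>W. card (Bad p))" unfolding U_def by (rule card_UN_le[OF finW])
  then have "real (card U) \<le> (\<Sum>p\<in>W. real (card (Bad p)))" by (metis of_nat_le_iff of_nat_sum)
  also have "\<dots> \<le> (\<Sum>p\<in>W. psi p n)" by (rule sum_mono) (rule cBad)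
  finally have cU: "real (card U) \<le> (\<Sum>p\<in>W. psi p n)" .
  have low: "real (card Good) \<ge> real n - (\<Sum>p\<in>W. psi p n)"
  proof -
    have "real n \<le> real (card ({0..<n} - U)) + real (card U)" using cG2 by linarith
    moreover have "real (card ({0..<n} - U)) \<le> real (card Good)" using cG1 by simp
    ultimately show ?thesis using cU by linarith
  qed
  define PR where "PR = {p::nat. prime p \<and> p \<ge> 5}"
  have "infinite PR"
  proof -
    have "PR = {p. prime p} - {..<5}" unfolding PR_def by auto
    then show ?thesis using Diff_infinite_finite[OF _ primes_infinite, of "{..<5}"] by simp
  qed
  then have "infinite (PR - W)" using Diff_infinite_finite[OF finW] by blast
  then obtain X where X: "finite X" "card X = s - card W" "X \<subseteq> PR - W"
    using infinite_arbitrarily_large by blast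
  define P' where "P' = W \<union> X"
  have WPR: "W \<subseteq> PR" unfolding W_def T_def PR_def by auto
  have P'1: "P' \<subseteq> PR" "finite P'" unfolding P'_def using X WPR finW by auto
  have P'2: "card P' = s" unfolding P'_def using card_Un_disjoint[OF finW X(1)] X cardW by auto
  have sP': "(\<Sum>p\<in>P'. psi p n) \<ge> (\<Sum>p\<in>W. psi p n)"
  proof -
    have disj: "W \<inter> X = {}" using X(3) by auto
    have "(\<Sum>p\<in>P'. psi p n) = (\<Sum>p\<in>W. psi p n) + (\<Sum>p\<in>X. psi p n)"
      unfolding P'_def by (rule sum.union_disjoint[OF finW X(1) disj])
    moreover have "(\<Sum>p\<in>X. psi p n) \<ge> 0" by (rule sum_nonneg) (rule psi_nonneg)
    ultimately show ?thesis by linarith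
  qed
  define ES where "ES = {real n - (\<Sum>p\<in>Q. psi p n) | Q. Q \<subseteq> {p. prime p \<and> p \<ge> 5} \<and> finite Q \<and> card Q = s}"
  have mem: "real n - (\<Sum>p\<in>P'. psi p n) \<in> ES" unfolding ES_def using P'1 P'2 unfolding PR_def by blast
  have bdd: "bdd_below ES"
  proof (rule bdd_belowI)
    fix x assume "x \<in> ES"
    then obtain Q where Q: "x = real n - (\<Sum>p\<in>Q. psi p n)" "Q \<subseteq> {p. prime p \<and> p \<ge> 5}" "card Q = s"
      unfolding ES_def by blast
    have "(\<Sum>p\<in>Q. psi p n) \<le> (\<Sum>p\<in>Q. 1 + real n * real n)"
      by (rule sum_mono, rule psi_le) (use Q(2) in auto)
    also have "\<dots> = real s * (1 + real n * real n)" using Q(3) by simp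
    finally show "real n - real s * (1 + real n * real n) \<le> x" using Q(1) by linarith
  qed
  have "eta n s \<le> real n - (\<Sum>p\<in>P'. psi p n)"
    unfolding eta_def using cInf_lower[OF mem bdd] unfolding ES_def .
  also have "\<dots> \<le> real n - (\<Sum>p\<in>W. psi p n)" using sP' by linarith
  also have "\<dots> \<le> real (card Good)" using low .
  finally show ?thesis unfolding Good_def \<beta>_def .
qed

end
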